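(* Let $f, g \in \mathrm{Inj}(\Omega)$ each have exactly one infinite cycle, and satisfy $(f)\mathrm{C}_n, (g)\mathrm{C}_n < \aleph_0$ for all $n \in \mathbb{Z}_+$. Then $f \approx_{\mathrm{even}} g$ if and only if $f = hh_1gh_2h^{-1}$ for some $h \in \mathrm{Sym}(\Omega)$ and $h_1, h_2 \in \mathrm{Alt}(\Omega)$.
   Context: $\Omega$ is a countably infinite set; maps are written on the right and composed left to right. $\mathrm{Inj}(\Omega)$ is the monoid of injective maps $\Omega\to\Omega$, $\mathrm{Sym}(\Omega)$ the permutation group, $\mathrm{Alt}(\Omega)$ the group of even permutations moving only finitely many points. For $f\in\mathrm{Inj}(\Omega)$, a cycle of $f$ is a nonempty $\Sigma\subseteq\Omega$ such that (a) for all $\alpha\in\Omega$, $(\alpha)f\in\Sigma$ iff $\alpha\in\Sigma$, and (b) no proper nonempty subset of $\Sigma$ satisfies (a). A forward cycle is an infinite cycle $\Sigma$ with $\Sigma\setminus(\Omega)f\ne\emptyset$; an open cycle is an infinite cycle that is not forward. $(f)\mathrm{C}_n$ ($n\in\mathbb{Z}_+$) is the cardinal number of cycles of cardinality $n$; $(f)\mathrm{C}_{\mathrm{open}}$, $(f)\mathrm{C}_{\mathrm{fwd}}$ the numbers of open and forward cycles. $f\approx_{\mathrm{fin}}g$ means: $(f)\mathrm{C}_{\mathrm{open}}=(g)\mathrm{C}_{\mathrm{open}}$; $(f)\mathrm{C}_{\mathrm{fwd}}=(g)\mathrm{C}_{\mathrm{fwd}}$; $(f)\mathrm{C}_n\ne(g)\mathrm{C}_n$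 for only finitely many $n$; and whenever $(f)\mathrm{C}_n\ne(g)\mathrm{C}_n$, both are finite. $f\approx_{\mathrm{even}} g$ means $f\approx_{\mathrm{fin}}g$ and $\sum_{n\in\mathbb{Z}_+}((f)\mathrm{C}_n-(g)\mathrm{C}_n)$ is an even integer, where a term is $0$ whenever $(f)\mathrm{C}_n=(g)\mathrm{C}_n$ (even if infinite). *)

theory Defs
  imports "HOL-Combinatorics.Permutations" "HOL-Library.Extended_Nat" "HOL-Library.Countable"
begin

(* Maps are applied as ordinary functions; the paper's right-action product
   h h1 g h2 h^{-1} (left to right) becomes  inv h \<circ> h2 \<circ> g \<circ> h1 \<circ> h. *)

definition closed_under :: "('a \<Rightarrow> 'a) \<Rightarrow> 'a set \<Rightarrow> bool" where
  "closed_under f S \<longleftrightarrow> (\<forall>a. f a \<in> S \<longleftrightarrow> a \<in> S)"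

definition cycles :: "('a \<Rightarrow> 'a) \<Rightarrow> 'a set set" where
  "cycles f = {S. S \<noteq> {} \<and> closed_under f S \<and>
                  (\<forall>T. T \<subseteq> S \<and> T \<noteq> {} \<and> T \<noteq> S \<longrightarrow> \<not> closed_under f T)}"

(* cardinal number of a set of cycles; on a countable ground set this is at most aleph_0 *)
definition ecard :: "'b set \<Rightarrow> enat" where
  "ecard A = (if finite A then enat (card A) else \<infinity>)"

definition Cn :: "nat \<Rightarrow> ('a \<Rightarrow> 'a) \<Rightarrow> enat" where
  "Cn n f = ecard {S \<in> cycles f. finite S \<and> card S = n}"

definition fwd_cycles :: "('a \<Rightarrow> 'a) \<Rightarrow> 'a set set" where
  "fwd_cycles f = {S \<in> cycles f. infinite S \<and> S - range f \<noteq> {}}"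

definition open_cycles :: "('a \<Rightarrow> 'a) \<Rightarrow> 'a set set" where
  "open_cycles f = {S \<in> cycles f. infinite S \<and> \<not> (S - range f \<noteq> {})}"

definition C_open :: "('a \<Rightarrow> 'a) \<Rightarrow> enat" where
  "C_open f = ecard (open_cycles f)"

definition C_fwd :: "('a \<Rightarrow> 'a) \<Rightarrow> enat" where
  "C_fwd f = ecard (fwd_cycles f)"

definition approx_fin :: "('a \<Rightarrow> 'a) \<Rightarrow> ('a \<Rightarrow> 'a) \<Rightarrow> bool" where
  "approx_fin f g \<longleftrightarrow>
     C_open f = C_open g \<and> C_fwd f = C_fwd g \<and>
     finite {n. 0 < n \<and> Cn n f \<noteq> Cn n g} \<and>
     (\<forall>n>0. Cn n f \<noteq> Cn n g \<longrightarrow> Cn n f \<noteq> \<infinity> \<and> Cn n g \<noteq> \<infinity>)"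

definition approx_even :: "('a \<Rightarrow> 'a) \<Rightarrow> ('a \<Rightarrow> 'a) \<Rightarrow> bool" where
  "approx_even f g \<longleftrightarrow> approx_fin f g \<and>
     even (\<Sum>n\<in>{n. 0 < n \<and> Cn n f \<noteq> Cn n g}.
             int (the_enat (Cn n f)) - int (the_enat (Cn n g)))"

(* Alt(Omega): even permutations moving only finitely many points *)
definition Alt :: "('a \<Rightarrow> 'a) set" where
  "Alt = {p. permutation p \<and> evenperm p}"

end

theory Submission
  imports Defs
begin


definition cls :: "('a \<Rightarrow> 'a) \<Rightarrow> 'a \<Rightarrow> 'a set" where
  "cls f x = {y. \<exists>m n. (f^^m) x = (f^^n) y}"

lemma funpow_comm: "(f^^m) (f x) = f ((f^^m) x)"
  by (metis comp_apply funpow_Suc_right funpow.simps(2))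

lemma cls_self[simp]: "x \<in> cls f x"
  unfolding cls_def by (auto intro: exI[of _ 0])

lemma closed_funpow:
  assumes "closed_under f S" "x \<in> S" shows "(f^^m) x \<in> S"
  using assms by (induction m) (auto simp: closed_under_def)

lemma closed_funpow_rev:
  assumes "closed_under f S" "(f^^m) x \<in> S" shows "x \<in> S"
  using assms(2) proof (induction m arbitrary: x)
  case (Suc m)
  then have "(f^^m) (f x) \<in> S" by (simp add: funpow_comm)
  then have "f x \<in> S" using Suc.IH by blast
  then show ?case using assms(1) by (simp add: closed_under_def)
qed simp

lemma cls_sub_closed: "closed_under f S \<Longrightarrow> x \<in> S \<Longrightarrow> cls f x \<subseteq> S"
proof
  fix y assume c: "closed_under f S" and x: "x \<in> S" and y: "y \<in> cls f x"
  then obtain m n where e: "(f^^m) x = (f^^n) y" unfolding cls_def by blast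
  have "(f^^m) x \<in> S" using closed_funpow[OF c x] .
  then have "(f^^n) y \<in> S" using e by simp
  then show "y \<in> S" using closed_funpow_rev[OF c] by blast
qed

lemma cls_closed: "closed_under f (cls f x)"
  unfolding closed_under_def
proof (intro allI iffI)
  fix a assume "f a \<in> cls f x"
  then obtain m n where "(f ^^ m) x = (f ^^ n) (f a)" unfolding cls_def by blast
  then have "(f ^^ m) x = (f ^^ Suc n) a" by (metis comp_apply funpow_Suc_right)
  then show "a \<in> cls f x" unfolding cls_def by blast
next
  fix a assume "a \<in> cls f x"
  then obtain m n where "(f ^^ m) x = (f ^^ n) a" unfolding cls_def by blast
  then have "(f ^^ Suc m) x = (f ^^ n) (f a)" by (simp add: funpow_comm)
  then show "f a \<in> cls f x" unfolding cls_def by blast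
qed

lemma cls_trans: "y \<in> cls f x \<Longrightarrow> z \<in> cls f y \<Longrightarrow> z \<in> cls f x"
  using cls_sub_closed[OF cls_closed[of f x]] by blast

lemma cls_sym: "y \<in> cls f x \<Longrightarrow> x \<in> cls f y"
  unfolding cls_def by (auto dest: sym)

lemma cls_eq: "y \<in> cls f x \<Longrightarrow> cls f y = cls f x"
  by (meson cls_sym cls_trans subsetI subset_antisym)

lemma cycles_closed: "S \<in> cycles f \<Longrightarrow> closed_under f S"
  unfolding cycles_def by blast

lemma cycles_cls: "cycles f = range (cls f)"
proof safe
  fix S assume S: "S \<in> cycles f"
  then obtain x where x: "x \<in> S" unfolding cycles_def by auto
  have "cls f x \<subseteq> S" using cls_sub_closed[OF cycles_closed[OF S] x] .
  moreover have "cls f x \<noteq> {}" using cls_self[of x f] by blast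
  moreover have "\<forall>T. T \<subseteq> S \<and> T \<noteq> {} \<and> T \<noteq> S \<longrightarrow> \<not> closed_under f T"
    using S unfolding cycles_def by blast
  ultimately have "cls f x = S" using cls_closed[of f x] by blast
  then show "S \<in> range (cls f)" by blast
next
  fix x show "cls f x \<in> cycles f"
    unfolding cycles_def
  proof (intro CollectI conjI allI impI)
    show "cls f x \<noteq> {}" using cls_self[of x f] by blast
    show "closed_under f (cls f x)" by (rule cls_closed)
    fix T assume T: "T \<subseteq> cls f x \<and> T \<noteq> {} \<and> T \<noteq> cls f x"
    show "\<not> closed_under f T"
    proof
      assume c: "closed_under f T"
      from T obtain y where y: "y \<in> T" by auto
      then have "cls f y \<subseteq> T" using cls_sub_closed[OF c y] by blast
      moreover have "y \<in> cls f x" using y T by blast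
      then have "cls f y = cls f x" by (rule cls_eq)
      ultimately show False using T by blast
    qed
  qed
qed

lemma cycles_mem: "S \<in> cycles f \<Longrightarrow> x \<in> S \<Longrightarrow> S = cls f x"
proof -
  assume "S \<in> cycles f" "x \<in> S"
  then obtain y where "S = cls f y" unfolding cycles_cls by blast
  then show ?thesis using \<open>x \<in> S\<close> cls_eq by metis
qed

lemma cls_in_cycles[simp]: "cls f x \<in> cycles f"
  unfolding cycles_cls by blast

lemma cycles_nonempty: "S \<in> cycles f \<Longrightarrow> S \<noteq> {}"
  unfolding cycles_def by blast

lemma cycles_disj: "S \<in> cycles f \<Longrightarrow> T \<in> cycles f \<Longrightarrow> x \<in> S \<Longrightarrow> x \<in> T \<Longrightarrow> S = T"
  using cycles_mem by metis

lemma cls_inj_cases: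
  assumes "inj f" "y \<in> cls f x"
  shows "(\<exists>j. y = (f^^j) x) \<or> (\<exists>j. (f^^j) y = x)"
proof -
  obtain m n where e: "(f^^m) x = (f^^n) y" using assms(2) unfolding cls_def by blast
  show ?thesis
  proof (cases "n \<le> m")
    case True
    then have "(f^^n) ((f^^(m-n)) x) = (f^^n) y"
      using e by (metis add_diff_inverse_nat funpow_add comp_apply not_le)
    then have "y = (f^^(m-n)) x" using inj_fn[OF assms(1), of n] by (auto dest: injD)
    then show ?thesis by (rule disjI1[OF exI])
  next
    case False
    then have "(f^^m) ((f^^(n-m)) y) = (f^^m) x"
      using e by (metis add_diff_inverse_nat funpow_add comp_apply less_or_eq_imp_le not_le)
    then have "x = (f^^(n-m)) y" using inj_fn[OF assms(1), of m] by (auto dest: injD)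
    then have "(f^^(n-m)) y = x" by simp
    then show ?thesis by (rule disjI2[OF exI])
  qed
qed

lemma funpow_in_cls: "(f^^j) x \<in> cls f x"
  unfolding cls_def by (rule CollectI, rule exI[of _ j], rule exI[of _ 0]) simp

lemma funpow_in_cls': "(f^^j) y = x \<Longrightarrow> y \<in> cls f x"
  unfolding cls_def by (rule CollectI, rule exI[of _ 0], rule exI[of _ j]) simp



lemma funpow_swap: fixes f :: "'a \<Rightarrow> 'a" shows "(f^^m) ((f^^n) x) = (f^^n) ((f^^m) x)"
  by (metis add.commute comp_apply funpow_add)

lemma funpow_add_apply: fixes f :: "'a \<Rightarrow> 'a" shows "(f^^(m+n)) x = (f^^m) ((f^^n) x)"
  by (simp add: funpow_add)

lemma funpow_mult_period: fixes f :: "'a \<Rightarrow> 'a" shows "(f^^p) x = x \<Longrightarrow> (f^^(k*p)) x = x"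
  by (induction k) (auto simp: funpow_add_apply)

lemma funpow_mod_period: fixes f :: "'a \<Rightarrow> 'a" shows "(f^^p) x = x \<Longrightarrow> (f^^j) x = (f^^(j mod p)) x"
proof -
  assume a: "(f^^p) x = x"
  have "(f^^j) x = (f^^(j mod p + (j div p)*p)) x" by simp
  also have "\<dots> = (f^^(j mod p)) ((f^^((j div p)*p)) x)" by (rule funpow_add_apply)
  also have "\<dots> = (f^^(j mod p)) x" using funpow_mult_period[OF a] by simp
  finally show ?thesis .
qed

lemma funpow_cancel: fixes f :: "'a \<Rightarrow> 'a" assumes "inj f" "(f^^n) x = (f^^n) y" shows "x = y"
  by (metis assms injD inj_fn)

lemma funpow_diff_eq: fixes f :: "'a \<Rightarrow> 'a"
  assumes "inj f" "i \<le> j" "(f^^i) x = (f^^j) x" shows "(f^^(j-i)) x = x"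
proof -
  have "(f^^i) ((f^^(j-i)) x) = (f^^i) x"
    using assms(2,3) by (metis funpow_add_apply le_add_diff_inverse)
  then show ?thesis using funpow_cancel[OF assms(1)] by blast
qed

lemma finite_cls_period:
  assumes "inj f" "finite (cls f x)" shows "\<exists>p>0. (f^^p) x = x"
proof -
  have "range (\<lambda>i. (f^^i) x) \<subseteq> cls f x" by (auto simp: funpow_in_cls)
  then have "finite (range (\<lambda>i. (f^^i) x))" using assms(2) finite_subset by blast
  then have "\<not> inj (\<lambda>i. (f^^i) x)" using finite_imageD infinite_UNIV_nat by blast
  then obtain i j where ij: "i \<noteq> j" "(f^^i) x = (f^^j) x" unfolding inj_def by blast
  show ?thesis
  proof (cases "i < j")
    case True
    then show ?thesis using funpow_diff_eq[OF assms(1), of i j x] ij by (intro exI[of _ "j-i"]) auto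
  next
    case False
    then show ?thesis using funpow_diff_eq[OF assms(1), of j i x] ij by (intro exI[of _ "i-j"]) auto
  qed
qed

lemma period_cls:
  assumes "inj f" "0 < p" "(f^^p) x = x"
  shows "cls f x = (\<lambda>i. (f^^i) x) ` {..<p}"
proof
  show "(\<lambda>i. (f ^^ i) x) ` {..<p} \<subseteq> cls f x" by (auto simp: funpow_in_cls)
  show "cls f x \<subseteq> (\<lambda>i. (f ^^ i) x) ` {..<p}"
  proof
    fix y assume "y \<in> cls f x"
    then consider j where "y = (f^^j) x" | j where "(f^^j) y = x"
      using cls_inj_cases[OF assms(1)] by (metis cls_sym)
    then obtain j where j: "y = (f^^j) x"
    proof cases
      case 1 then show ?thesis using that by blast
    next
      case (2 j)
      have "(f^^j) ((f^^(j*p)) y) = (f^^(j*p)) ((f^^j) y)" by (rule funpow_swap)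
      also have "\<dots> = (f^^j) y" using 2 funpow_mult_period[OF assms(3)] by simp
      finally have yy: "(f^^(j*p)) y = y" using funpow_cancel[OF assms(1)] by blast
      have "(f^^((p - 1)*j)) x = (f^^((p-1)*j)) ((f^^j) y)" using 2 by simp
      also have "\<dots> = (f^^((p-1)*j + j)) y" by (simp add: funpow_add_apply)
      also have "(p-1)*j + j = j*p" using assms(2) by (simp add: algebra_simps)
      finally show ?thesis using yy that by metis
    qed
    then have "y = (f^^(j mod p)) x" using funpow_mod_period[OF assms(3)] by simp
    then show "y \<in> (\<lambda>i. (f ^^ i) x) ` {..<p}" using assms(2) by auto
  qed
qed

definition per :: "('a \<Rightarrow> 'a) \<Rightarrow> 'a \<Rightarrow> nat" where
  "per f x = (LEAST p. 0 < p \<and> (f^^p) x = x)"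

lemma per_props:
  assumes "inj f" "finite (cls f x)"
  shows "0 < per f x" "(f^^(per f x)) x = x" "\<And>i. 0 < i \<Longrightarrow> i < per f x \<Longrightarrow> (f^^i) x \<noteq> x"
proof -
  obtain p where "0 < p \<and> (f^^p) x = x" using finite_cls_period[OF assms] by blast
  then have "0 < per f x \<and> (f^^(per f x)) x = x" unfolding per_def by (rule LeastI)
  then show "0 < per f x" "(f^^(per f x)) x = x" by auto
  fix i assume "0 < i" "i < per f x"
  then show "(f^^i) x \<noteq> x" unfolding per_def using not_less_Least by blast
qed

lemma per_distinct:
  assumes "inj f" "finite (cls f x)" "i < per f x" "j < per f x" "(f^^i) x = (f^^j) x"
  shows "i = j"
proof (rule ccontr)
  assume "i \<noteq> j"
  then consider "i < j" | "j < i" by linarith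
  then show False
  proof cases
    case 1
    then have "(f^^(j-i)) x = x" using funpow_diff_eq[OF assms(1), of i j x] assms(5) by simp
    then show False using per_props(3)[OF assms(1,2), of "j-i"] 1 assms(4) by simp
  next
    case 2
    then have "(f^^(i-j)) x = x" using funpow_diff_eq[OF assms(1), of j i x] assms(5) by simp
    then show False using per_props(3)[OF assms(1,2), of "i-j"] 2 assms(3) by simp
  qed
qed

lemma card_cls:
  assumes "inj f" "finite (cls f x)"
  shows "card (cls f x) = per f x"
proof -
  have e: "cls f x = (\<lambda>i. (f^^i) x) ` {..<per f x}"
    using period_cls[OF assms(1) per_props(1,2)[OF assms]] .
  have "inj_on (\<lambda>i. (f^^i) x) {..<per f x}"
    using per_distinct[OF assms] by (auto intro: inj_onI)
  then show ?thesis using e card_image by fastforce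
qed

lemma finite_cls_iff_eq:
  assumes "inj f" "finite (cls f x)"
  shows "(f^^a) x = (f^^b) x \<longleftrightarrow> a mod card (cls f x) = b mod card (cls f x)"
proof -
  have c: "card (cls f x) = per f x" by (rule card_cls[OF assms])
  have p: "(f^^(per f x)) x = x" "0 < per f x" using per_props[OF assms] by auto
  show ?thesis
  proof
    assume "(f^^a) x = (f^^b) x"
    then have "(f^^(a mod per f x)) x = (f^^(b mod per f x)) x"
      using funpow_mod_period[OF p(1)] by metis
    then show "a mod card (cls f x) = b mod card (cls f x)"
      using per_distinct[OF assms] p(2) c by simp
  next
    assume "a mod card (cls f x) = b mod card (cls f x)"
    then show "(f^^a) x = (f^^b) x" using funpow_mod_period[OF p(1)] c by metis
  qed
qed

lemma infinite_cls_iff_eq: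
  assumes "inj f" "infinite (cls f x)"
  shows "(f^^a) x = (f^^b) x \<longleftrightarrow> a = b"
proof
  assume e: "(f^^a) x = (f^^b) x"
  show "a = b"
  proof (rule ccontr)
    assume "a \<noteq> b"
    then obtain p where "0 < p" "(f^^p) x = x"
    proof (cases "a < b")
      case True
      then show ?thesis using funpow_diff_eq[OF assms(1), of a b x] e that[of "b-a"] by simp
    next
      case False
      then have "b < a" using \<open>a \<noteq> b\<close> by simp
      then show ?thesis using funpow_diff_eq[OF assms(1), of b a x] e that[of "a-b"] by simp
    qed
    then show False using period_cls[OF assms(1)] assms(2) by (metis finite_imageI finite_lessThan)
  qed
qed simp

lemma finite_cls_range:
  assumes "inj f" "finite (cls f x)" "y \<in> cls f x" shows "y \<in> range f"
proof -
  have fy: "finite (cls f y)" using cls_eq[OF assms(3)] assms(2) by simp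
  have "(f^^(per f y)) y = y" "0 < per f y" using per_props[OF assms(1) fy] by auto
  then obtain q where "per f y = Suc q" "(f^^(Suc q)) y = y" using gr0_conv_Suc by metis
  then have "f ((f^^q) y) = y" by simp
  then show ?thesis by (metis rangeI)
qed

lemma cls_range_preimage:
  assumes "cls f x \<subseteq> range f" "t \<in> cls f x"
  shows "\<exists>y\<in>cls f x. (f^^j) y = t"
proof (induction j)
  case 0 then show ?case using assms(2) by auto
next
  case (Suc j)
  then obtain z where z: "z \<in> cls f x" "(f^^j) z = t" by blast
  then obtain y where y: "z = f y" using assms(1) by blast
  then have "y \<in> cls f x" using z(1) cls_closed[of f x] unfolding closed_under_def by blast
  moreover have "(f^^Suc j) y = t" using z y by (metis comp_apply funpow_Suc_right)
  ultimately show ?case by blast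
qed

lemma nonrange_unique:
  assumes "inj f" "s \<in> cls f x" "s' \<in> cls f x" "s \<notin> range f" "s' \<notin> range f"
  shows "s = s'"
proof -
  have "s' \<in> cls f s" using assms(2,3) by (metis cls_eq)
  then consider j where "s' = (f^^j) s" | j where "(f^^j) s' = s"
    using cls_inj_cases[OF assms(1)] by blast
  then show ?thesis
  proof cases
    case 1 then show ?thesis using assms(5)
      by (cases j) auto
  next
    case 2 then show ?thesis using assms(4)
      by (cases j) auto
  qed
qed

lemma nonrange_root:
  assumes "inj f" "s \<in> cls f x" "s \<notin> range f" "y \<in> cls f x"
  shows "\<exists>j. y = (f^^j) s"
proof -
  have "y \<in> cls f s" using assms(2,4) by (metis cls_eq)
  then consider j where "y = (f^^j) s" | j where "(f^^j) y = s"
    using cls_inj_cases[OF assms(1)] by blast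
  then show ?thesis
  proof cases
    case (2 j) then show ?thesis using assms(3)
      by (cases j) (auto intro: exI[of _ 0])
  qed blast
qed



lemma agree_funpow:
  assumes "closed_under g S" "x \<in> S" "\<forall>z\<in>S. g' z = g z"
  shows "(g'^^m) x = (g^^m) x"
proof (induction m)
  case (Suc m)
  have "(g^^m) x \<in> S" using closed_funpow[OF assms(1,2)] .
  then show ?case using Suc assms(3) by simp
qed simp

lemma agree_cls_sub:
  assumes "closed_under g S" "closed_under g' S" "x \<in> S" "\<forall>z\<in>S. g' z = g z"
  shows "cls g' x \<subseteq> cls g x"
proof
  fix y assume "y \<in> cls g' x"
  then obtain m n where e: "(g'^^m) x = (g'^^n) y" unfolding cls_def by blast
  have "y \<in> S" using cls_sub_closed[OF assms(2,3)] \<open>y \<in> cls g' x\<close> by blast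
  have "(g^^m) x = (g^^n) y"
    using e agree_funpow[OF assms(1,3,4)] agree_funpow[OF assms(1) \<open>y \<in> S\<close> assms(4)] by simp
  then show "y \<in> cls g x" unfolding cls_def by blast
qed

lemma agree_cls:
  assumes "closed_under g S" "closed_under g' S" "x \<in> S" "\<forall>z\<in>S. g' z = g z"
  shows "cls g' x = cls g x"
  using agree_cls_sub[OF assms] agree_cls_sub[OF assms(2,1,3)] assms(4) by force

lemma closed_compl: "closed_under g S \<Longrightarrow> closed_under g (- S)"
  unfolding closed_under_def by blast

lemma closed_union: "closed_under g S \<Longrightarrow> closed_under g T \<Longrightarrow> closed_under g (S \<union> T)"
  unfolding closed_under_def by blast

lemma closed_inter: "closed_under g S \<Longrightarrow> closed_under g T \<Longrightarrow> closed_under g (S \<inter> T)"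
  unfolding closed_under_def by blast

lemma gt_other: "gt = g \<circ> transpose a b \<Longrightarrow> z \<noteq> a \<Longrightarrow> z \<noteq> b \<Longrightarrow> gt z = g z"
  by (simp add: transpose_def)
lemma gt_a: "gt = g \<circ> transpose a b \<Longrightarrow> gt a = g b"
  by simp
lemma gt_b: "gt = g \<circ> transpose a b \<Longrightarrow> gt b = g a"
  by simp

lemma closed_transp:
  assumes "closed_under g U" "a \<in> U" "b \<in> U" "gt = g \<circ> transpose a b"
  shows "closed_under gt U"
  unfolding closed_under_def
proof
  fix z show "(gt z \<in> U) = (z \<in> U)"
  proof (cases "z = a \<or> z = b")
    case True
    then show ?thesis using gt_a[OF assms(4)] gt_b[OF assms(4)] assms(1-3) unfolding closed_under_def by metis
  next
    case False
    then show ?thesis using gt_other[OF assms(4)] assms(1) unfolding closed_under_def by metis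
  qed
qed

lemma cycles_transp_rep:
  assumes "closed_under g U" "a \<in> U" "b \<in> U" "gt = g \<circ> transpose a b"
  shows "cycles gt =
           (cycles g - {S\<in>cycles g. S \<subseteq> U}) \<union> {cls gt x | x. x \<in> U}"
proof -
  let ?g = gt
  have cU: "closed_under g (-U)" using closed_compl[OF assms(1)] .
  have cU': "closed_under ?g (-U)" using closed_compl[OF closed_transp[OF assms]] .
  have ag: "\<forall>z\<in>-U. ?g z = g z"
  proof
    fix z assume "z \<in> -U"
    then have "z \<noteq> a" "z \<noteq> b" using assms(2,3) by auto
    then show "gt z = g z" by (rule gt_other[OF assms(4)])
  qed
  have out: "x \<notin> U \<Longrightarrow> cls ?g x = cls g x" for x using agree_cls[OF cU cU' _ ag] by simp
  show ?thesis
  proof (intro equalityI subsetI)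
    fix S assume "S \<in> cycles ?g"
    then obtain x where S: "S = cls ?g x" unfolding cycles_cls by blast
    show "S \<in> (cycles g - {S\<in>cycles g. S \<subseteq> U}) \<union> {cls ?g x | x. x \<in> U}"
    proof (cases "x \<in> U")
      case True then show ?thesis using S by blast
    next
      case False
      then have "S = cls g x" using out S by simp
      moreover have "\<not> cls g x \<subseteq> U" using False cls_self[of x g] by blast
      ultimately show ?thesis by auto
    qed
  next
    fix S assume S: "S \<in> (cycles g - {S\<in>cycles g. S \<subseteq> U}) \<union> {cls ?g x | x. x \<in> U}"
    show "S \<in> cycles ?g"
    proof (cases "S \<in> {cls ?g x | x. x \<in> U}")
      case True then show ?thesis by auto
    next
      case False
      then have S1: "S \<in> cycles g" "\<not> S \<subseteq> U" using S by auto
      then obtain x where x: "x \<in> S" "x \<notin> U" by blast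
      then have "S = cls g x" using cycles_mem[OF S1(1)] by blast
      then have "S = cls ?g x" using out x(2) by simp
      then show ?thesis by simp
    qed
  qed
qed

lemma class_sub_class:
  assumes "S \<in> cycles g" "S \<subseteq> cls g a" shows "S = cls g a"
proof -
  obtain x where "x \<in> S" using cycles_nonempty[OF assms(1)] by blast
  then show ?thesis using assms cycles_mem cls_eq by (metis subsetD)
qed

lemma split_iter:
  fixes g :: "'a \<Rightarrow> 'a"
  assumes g: "inj g" and k: "0 < k" and ne: "\<forall>i. 0 < i \<and> i \<le> k \<longrightarrow> (g^^i) a \<noteq> a"
    and b: "b = (g^^k) a" and gt: "gt = g \<circ> transpose a b"
  shows "\<forall>j<k. (gt^^j) (g a) = (g^^(Suc j)) a"
proof (intro allI impI)
  fix j assume "j < k"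
  then show "(gt^^j) (g a) = (g^^(Suc j)) a"
  proof (induction j)
    case (Suc j)
    have na: "(g^^(Suc j)) a \<noteq> a" using ne[rule_format, of "Suc j"] Suc.prems by simp
    have nb: "(g^^(Suc j)) a \<noteq> b"
    proof
      assume "(g^^(Suc j)) a = b"
      then have "(g^^(k - Suc j)) a = a" using funpow_diff_eq[OF g, of "Suc j" k a] Suc.prems b by simp
      then show False using ne Suc.prems by (metis diff_le_self zero_less_diff)
    qed
    have "(gt^^(Suc j)) (g a) = gt ((g^^(Suc j)) a)"
      using Suc by simp
    also have "\<dots> = (g^^(Suc (Suc j))) a" using na nb gt_other[OF gt] by simp
    finally show ?case .
  qed simp
qed

lemma split_cycles:
  fixes g :: "'a \<Rightarrow> 'a"
  assumes g: "inj g" and k: "0 < k" and ne: "\<forall>i. 0 < i \<and> i \<le> k \<longrightarrow> (g^^i) a \<noteq> a"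
    and b: "b = (g^^k) a" and gt: "gt = g \<circ> transpose a b"
  defines "C1 \<equiv> (\<lambda>i. (g^^i) a) ` {1..k}"
  shows "cycles gt = (cycles g - {cls g a}) \<union> {C1, cls g a - C1}"
    and "finite C1" "card C1 = k" "C1 \<subseteq> cls g a" "a \<notin> C1" "C1 \<subseteq> range g"
    and "C1 \<in> cycles gt" "cls g a - C1 \<in> cycles gt"
proof -
  let ?g = "gt"
  let ?C = "cls g a"
  have it: "\<forall>j<k. (?g^^j) (g a) = (g^^(Suc j)) a" using split_iter[OF assms(1-5)] .
  have ig: "inj ?g" using g gt by (simp add: inj_compose)
  have per: "(?g^^k) (g a) = g a"
  proof -
    obtain k' where k': "k = Suc k'" using k gr0_conv_Suc by blast
    have "(?g^^k) (g a) = ?g ((?g^^k') (g a))" using k' by simp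
    also have "\<dots> = ?g ((g^^k) a)" using it k' by simp
    also have "\<dots> = g a" using b gt_b[OF gt] by simp
    finally show ?thesis .
  qed
  have "cls ?g (g a) = (\<lambda>i. (?g^^i) (g a)) ` {..<k}" using period_cls[OF ig k per] .
  also have "\<dots> = (\<lambda>i. (g^^(Suc i)) a) ` {..<k}" using it by auto
  also have "\<dots> = C1" unfolding C1_def
  proof (intro equalityI subsetI)
    fix y assume "y \<in> (\<lambda>i. (g^^(Suc i)) a) ` {..<k}"
    then obtain i where "i < k" "y = (g^^(Suc i)) a" by blast
    then show "y \<in> (\<lambda>i. (g^^i) a) ` {1..k}" by (intro image_eqI[of _ _ "Suc i"]) auto
  next
    fix y assume "y \<in> (\<lambda>i. (g^^i) a) ` {1..k}"
    then obtain i where "1 \<le> i" "i \<le> k" "y = (g^^i) a" by auto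
    then show "y \<in> (\<lambda>i. (g^^(Suc i)) a) ` {..<k}" by (intro image_eqI[of _ _ "i - 1"]) auto
  qed
  finally have C1: "cls ?g (g a) = C1" .
  show "finite C1" unfolding C1_def by simp
  have inj: "inj_on (\<lambda>i. (g^^i) a) {1..k}"
  proof (rule inj_onI)
    fix i j assume ij: "i \<in> {1..k}" "j \<in> {1..k}" "(g^^i) a = (g^^j) a"
    show "i = j"
    proof (rule ccontr)
      assume "i \<noteq> j"
      then consider "i < j" | "j < i" by linarith
      then show False
      proof cases
        case 1
        then have "(g^^(j-i)) a = a" using funpow_diff_eq[OF g, of i j a] ij by simp
        then show False using ne 1 ij by auto
      next
        case 2
        then have "(g^^(i-j)) a = a" using funpow_diff_eq[OF g, of j i a] ij by simp
        then show False using ne 2 ij by auto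
      qed
    qed
  qed
  show "card C1 = k" unfolding C1_def using card_image[OF inj] by simp
  show sub: "C1 \<subseteq> ?C" unfolding C1_def by (auto simp: funpow_in_cls)
  show aC1: "a \<notin> C1"
  proof
    assume "a \<in> C1"
    then obtain i where "1 \<le> i" "i \<le> k" "(g^^i) a = a" unfolding C1_def by auto
    then show False using ne[rule_format, of i] by simp
  qed
  show "C1 \<subseteq> range g" unfolding C1_def
  proof
    fix y assume "y \<in> (\<lambda>i. (g^^i) a) ` {1..k}"
    then obtain i where "1 \<le> i" "y = (g^^i) a" by auto
    then show "y \<in> range g" by (cases i) auto
  qed
  have bC: "b \<in> ?C" using b funpow_in_cls by metis
  have bC1: "b \<in> C1" unfolding C1_def b using k by auto
  let ?E = "cls ?g a"
  have cC: "closed_under ?g ?C" using closed_transp[OF cls_closed _ bC gt] by simp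
  have E_sub: "?E \<subseteq> ?C" using cls_sub_closed[OF cC] by simp
  have EC1: "?E \<inter> C1 = {}"
  proof (rule ccontr)
    assume "?E \<inter> C1 \<noteq> {}"
    then obtain z where "z \<in> ?E" "z \<in> cls ?g (g a)" using C1 by blast
    then have "?E = cls ?g (g a)" by (metis cls_eq)
    then show False using aC1 C1 cls_self[of a ?g] by blast
  qed
  have cl: "closed_under g (C1 \<union> ?E)"
    unfolding closed_under_def
  proof
    fix y
    have c1: "closed_under ?g (C1 \<union> ?E)" using closed_union[OF cls_closed cls_closed] C1 by metis
    show "(g y \<in> C1 \<union> ?E) = (y \<in> C1 \<union> ?E)"
    proof (cases "y = a \<or> y = b")
      case True
      have "g a \<in> C1" using C1 cls_self by metis
      moreover have "g b \<in> ?E"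
      proof -
        have "g b = ?g a" using gt_a[OF gt] by simp
        then show ?thesis using cls_closed[of ?g a] cls_self[of a ?g] unfolding closed_under_def by metis
      qed
      ultimately show ?thesis using True bC1 cls_self[of a ?g] by blast
    next
      case False
      then have "g y = ?g y" using gt_other[OF gt] by simp
      then show ?thesis using c1 unfolding closed_under_def by metis
    qed
  qed
  have "?C \<subseteq> C1 \<union> ?E" using cls_sub_closed[OF cl] cls_self[of a ?g] by blast
  then have EE: "?E = ?C - C1" using E_sub EC1 sub by blast
  show C1c: "C1 \<in> cycles ?g" using C1 cls_in_cycles by metis
  show Ec: "?C - C1 \<in> cycles ?g" using EE cls_in_cycles by metis
  have rep: "cycles ?g = (cycles g - {S\<in>cycles g. S \<subseteq> ?C}) \<union> {cls ?g x | x. x \<in> ?C}"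
    using cycles_transp_rep[OF cls_closed _ bC gt] by simp
  have r1: "{S\<in>cycles g. S \<subseteq> ?C} = {?C}"
  proof (intro equalityI subsetI)
    fix S assume "S \<in> {S\<in>cycles g. S \<subseteq> ?C}"
    then have "S \<in> cycles g" "S \<subseteq> ?C" by auto
    then show "S \<in> {?C}" using class_sub_class[of S g a] by simp
  qed auto
  have r2: "{cls ?g x | x. x \<in> ?C} = {C1, ?C - C1}"
  proof (intro equalityI subsetI)
    fix S assume "S \<in> {cls ?g x | x. x \<in> ?C}"
    then obtain x where x: "x \<in> ?C" "S = cls ?g x" by blast
    then consider "x \<in> C1" | "x \<in> ?C - C1" by blast
    then show "S \<in> {C1, ?C - C1}"
    proof cases
      case 1 then have "S = C1" using x C1 cls_eq by metis
      then show ?thesis by simp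
    next
      case 2 then have "S = ?C - C1" using x EE cls_eq by metis
      then show ?thesis by simp
    qed
  next
    fix S assume "S \<in> {C1, ?C - C1}"
    moreover have "g a \<in> ?C" using funpow_in_cls[where f=g and j=1 and x=a] by simp
    moreover have "a \<in> ?C" by simp
    ultimately show "S \<in> {cls ?g x | x. x \<in> ?C}" using C1 EE by blast
  qed
  show "cycles ?g = (cycles g - {?C}) \<union> {C1, ?C - C1}" using rep r1 r2 by simp
qed



lemma merge_cycles:
  fixes g :: "'a \<Rightarrow> 'a"
  assumes g: "inj g" and fin: "finite (cls g a)" and b: "b \<notin> cls g a"
    and gt: "gt = g \<circ> transpose a b"
  shows "cycles gt = (cycles g - {cls g a, cls g b}) \<union> {cls g a \<union> cls g b}"
proof -
  define p where "p = per g a"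
  have pp: "0 < p" "(g^^p) a = a" using per_props[OF g fin] p_def by auto
  have ne: "\<And>i. 0 < i \<Longrightarrow> i < p \<Longrightarrow> (g^^i) a \<noteq> a" using per_props(3)[OF g fin] p_def by auto
  have it: "(gt^^j) (g a) = (g^^(Suc j)) a" if "j < p" for j
    using that
  proof (induction j)
    case (Suc j)
    have na: "(g^^(Suc j)) a \<noteq> a" using ne[of "Suc j"] Suc.prems by simp
    have nb: "(g^^(Suc j)) a \<noteq> b" using b funpow_in_cls[where f=g and j="Suc j" and x=a] by metis
    have "(gt^^(Suc j)) (g a) = gt ((g^^(Suc j)) a)" using Suc by simp
    also have "\<dots> = (g^^(Suc (Suc j))) a" using na nb gt_other[OF gt] by simp
    finally show ?case .
  qed simp
  obtain p' where p': "p = Suc p'" using pp(1) gr0_conv_Suc by blast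
  have "(gt^^p') (g a) = a" using it[of p'] p' pp(2) by simp
  then have gaE: "g a \<in> cls gt a" by (rule funpow_in_cls')
  have "(gt^^1) b = g a" using gt_b[OF gt] by simp
  then have "b \<in> cls gt (g a)" by (rule funpow_in_cls')
  then have bE: "b \<in> cls gt a" using cls_eq[OF gaE] by simp
  let ?E = "cls gt a"
  let ?U = "cls g a \<union> cls g b"
  have clE: "closed_under g ?E"
    unfolding closed_under_def
  proof
    fix y
    show "(g y \<in> ?E) = (y \<in> ?E)"
    proof (cases "y = a \<or> y = b")
      case True
      have "g b \<in> ?E"
      proof -
        have "g b = gt a" using gt_a[OF gt] by simp
        then show ?thesis using cls_closed[of gt a] cls_self[of a gt] unfolding closed_under_def by metis
      qed
      then show ?thesis using True gaE bE cls_self[of a gt] by blast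
    next
      case False
      then have "g y = gt y" using gt_other[OF gt] by simp
      then show ?thesis using cls_closed[of gt a] unfolding closed_under_def by metis
    qed
  qed
  have AE: "cls g a \<subseteq> ?E" using cls_sub_closed[OF clE] by simp
  have BE: "cls g b \<subseteq> ?E" using cls_sub_closed[OF clE bE] .
  have clU: "closed_under g ?U" using closed_union[OF cls_closed cls_closed] .
  have aU: "a \<in> ?U" and bU: "b \<in> ?U" by auto
  have clU': "closed_under gt ?U" using closed_transp[OF clU aU bU gt] .
  have EU: "?E \<subseteq> ?U" using cls_sub_closed[OF clU' aU] .
  have EqU: "?E = ?U" using AE BE EU by blast
  have rep: "cycles gt = (cycles g - {S\<in>cycles g. S \<subseteq> ?U}) \<union> {cls gt x | x. x \<in> ?U}"
    using cycles_transp_rep[OF clU aU bU gt] .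
  have r1: "{S\<in>cycles g. S \<subseteq> ?U} = {cls g a, cls g b}"
  proof (intro equalityI subsetI)
    fix S assume "S \<in> {S\<in>cycles g. S \<subseteq> ?U}"
    then have S: "S \<in> cycles g" "S \<subseteq> ?U" by auto
    then obtain x where x: "x \<in> S" using cycles_nonempty by blast
    then have Sx: "S = cls g x" using cycles_mem[OF S(1)] by simp
    show "S \<in> {cls g a, cls g b}"
    proof (cases "x \<in> cls g a")
      case True then have "S = cls g a" using Sx cls_eq[of x g a] by simp
      then show ?thesis by simp
    next
      case False then have "x \<in> cls g b" using x S(2) by blast
      then have "S = cls g b" using Sx cls_eq[of x g b] by simp
      then show ?thesis by simp
    qed
  qed auto
  have r2: "{cls gt x | x. x \<in> ?U} = {?U}"
  proof (intro equalityI subsetI)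
    fix S assume "S \<in> {cls gt x | x. x \<in> ?U}"
    then obtain x where "x \<in> ?U" "S = cls gt x" by blast
    then show "S \<in> {?U}" using EqU cls_eq by (metis singletonI)
  next
    fix S assume "S \<in> {?U}"
    then show "S \<in> {cls gt x | x. x \<in> ?U}" using EqU aU by blast
  qed
  show ?thesis using rep r1 r2 by simp
qed



definition Fin :: "('a \<Rightarrow> 'a) \<Rightarrow> 'a set set" where
  "Fin g = {S\<in>cycles g. finite S}"
definition Inf :: "('a \<Rightarrow> 'a) \<Rightarrow> 'a set set" where
  "Inf g = {S\<in>cycles g. infinite S}"
definition inftype :: "('a \<Rightarrow> 'a) \<Rightarrow> bool" where
  "inftype g \<longleftrightarrow> (\<exists>S\<in>Inf g. S - range g \<noteq> {})"
definition Pg :: "('a \<Rightarrow> 'a) \<Rightarrow> bool" where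
  "Pg g \<longleftrightarrow> inj g \<and> (\<exists>X. Inf g = {X}) \<and> (\<forall>n>0. finite {S\<in>Fin g. card S = n})"
definition Dl :: "'b set \<Rightarrow> 'b set \<Rightarrow> 'b set" where
  "Dl A B = (A - B) \<union> (B - A)"

lemma uniq_inf_iff: "(\<exists>!S. S \<in> cycles g \<and> infinite S) \<longleftrightarrow> (\<exists>X. Inf g = {X})"
proof
  assume "\<exists>!S. S \<in> cycles g \<and> infinite S"
  then obtain S where S: "S \<in> cycles g \<and> infinite S" and u: "\<And>T. T \<in> cycles g \<and> infinite T \<Longrightarrow> T = S"
    by (elim ex1E) blast
  have "Inf g = {S}"
  proof (intro equalityI subsetI)
    fix T assume "T \<in> Inf g" then show "T \<in> {S}" using u unfolding Inf_def by blast
  next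
    fix T assume "T \<in> {S}" then show "T \<in> Inf g" using S unfolding Inf_def by blast
  qed
  then show "\<exists>X. Inf g = {X}" by blast
next
  assume "\<exists>X. Inf g = {X}"
  then obtain X where X: "Inf g = {X}" by blast
  have "X \<in> Inf g" using X by simp
  then have X1: "X \<in> cycles g \<and> infinite X" unfolding Inf_def by blast
  have "\<And>T. T \<in> cycles g \<and> infinite T \<Longrightarrow> T = X"
  proof -
    fix T assume "T \<in> cycles g \<and> infinite T"
    then have "T \<in> Inf g" unfolding Inf_def by blast
    then show "T = X" using X by simp
  qed
  then show "\<exists>!S. S \<in> cycles g \<and> infinite S" using X1 by blast
qed

lemma rep_delta:
  assumes rep: "cycles g' = (cycles g - R) \<union> N" and R: "R \<subseteq> cycles g" and N: "N \<inter> cycles g = {}"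
  shows "Dl (Fin g') (Fin g) = {S\<in>R. finite S} \<union> {S\<in>N. finite S}"
    and "Inf g' = (Inf g - R) \<union> {S\<in>N. infinite S}"
    and "Fin g' - Fin g = {S\<in>N. finite S}"
  using assms unfolding Dl_def Fin_def Inf_def by auto

lemma range_gt: assumes "gt = g \<circ> transpose a b" shows "range gt = range g"
proof -
  have "surj (transpose a b)" by (simp add: bij_is_surj)
  then have "g ` range (transpose a b) = range g" by simp
  then show ?thesis unfolding assms by (metis image_comp)
qed

lemma fin_count:
  assumes "\<forall>n>0. finite {S\<in>Fin g. card S = n}" "finite (Fin g' - Fin g)"
  shows "\<forall>n>0. finite {S\<in>Fin g'. card S = n}"
proof (intro allI impI)
  fix n :: nat assume "0 < n"
  have "{S\<in>Fin g'. card S = n} \<subseteq> {S\<in>Fin g. card S = n} \<union> (Fin g' - Fin g)" by blast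
  then show "finite {S\<in>Fin g'. card S = n}" using assms \<open>0 < n\<close> finite_subset by blast
qed

lemma class_ne_sub:
  assumes "S \<subseteq> cls g a" "S \<noteq> cls g a" "S \<noteq> {}"
  shows "S \<notin> cycles g"
  using class_sub_class[of S g a] assms by blast

lemma inftype_single: "Inf g = {X} \<Longrightarrow> inftype g \<longleftrightarrow> X - range g \<noteq> {}"
  unfolding inftype_def by simp

lemma step_split:
  fixes g :: "'a \<Rightarrow> 'a"
  assumes P: "Pg g" and ab: "a \<noteq> b" and j: "b = (g^^j) a" and gt: "gt = g \<circ> transpose a b"
  shows "Pg gt \<and> (inftype gt \<longleftrightarrow> inftype g) \<and> finite (Dl (Fin gt) (Fin g)) \<and> odd (card (Dl (Fin gt) (Fin g)))"
proof -
  have g: "inj g" using P unfolding Pg_def by blast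
  have P3: "\<forall>n>0. finite {S\<in>Fin g. card S = n}" using P unfolding Pg_def by blast
  obtain X where X: "Inf g = {X}" using P unfolding Pg_def by blast
  have "j \<noteq> 0"
  proof
    assume "j = 0" then have "b = a" using j by simp
    then show False using ab by simp
  qed
  then have ex: "\<exists>j. 0 < j \<and> (g^^j) a = b"
  proof (intro exI[of _ j] conjI)
    show "(g^^j) a = b" using j by simp
  qed simp
  define k where "k = (LEAST j. 0 < j \<and> (g^^j) a = b)"
  have kk: "0 < k \<and> (g^^k) a = b" unfolding k_def by (rule LeastI_ex[OF ex])
  have ne: "\<forall>i. 0 < i \<and> i \<le> k \<longrightarrow> (g^^i) a \<noteq> a"
  proof (intro allI impI)
    fix i assume i: "0 < i \<and> i \<le> k"
    show "(g^^i) a \<noteq> a"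
    proof
      assume ia: "(g^^i) a = a"
      show False
      proof (cases "i = k")
        case True then show False using ia kk ab by simp
      next
        case False
        then have ik: "i < k" using i by simp
        have "(g^^k) a = (g^^(k-i)) ((g^^i) a)" using ik by (metis funpow_add_apply le_add_diff_inverse2 less_imp_le)
        then have "(g^^(k-i)) a = b" using ia kk by simp
        moreover have "k - i < (LEAST j. 0 < j \<and> (g^^j) a = b)" "0 < k - i" using ik i k_def by auto
        ultimately show False using not_less_Least[of "k - i" "\<lambda>j. 0 < j \<and> (g^^j) a = b"] by blast
      qed
    qed
  qed
  define C1 where "C1 = (\<lambda>i. (g^^i) a) ` {1..k}"
  let ?C = "cls g a"
  have b': "b = (g^^k) a" using kk by simp
  note sp = split_cycles[OF g conjunct1[OF kk] ne b' gt, folded C1_def]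
  have C1ne: "C1 \<noteq> {}" unfolding C1_def using kk by auto
  have aCC1: "a \<in> ?C - C1" using sp(5) by simp
  have C1nc: "C1 \<notin> cycles g" using class_ne_sub[OF sp(4) _ C1ne] aCC1 by blast
  have CC1nc: "?C - C1 \<notin> cycles g" using class_ne_sub[of "?C - C1" g a] aCC1 C1ne sp(4) by blast
  have C1CC1: "C1 \<noteq> ?C - C1" using C1ne by blast
  have rep: "cycles gt = (cycles g - {?C}) \<union> {C1, ?C - C1}" using sp(1) .
  have R: "{?C} \<subseteq> cycles g" by simp
  have N: "{C1, ?C - C1} \<inter> cycles g = {}" using C1nc CC1nc by auto
  note rd = rep_delta[OF rep R N]
  have rg: "range gt = range g" using range_gt[OF gt] .
  have igt: "inj gt" using g gt by (simp add: inj_compose)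
  show ?thesis
  proof (cases "finite ?C")
    case True
    then have fCC1: "finite (?C - C1)" by simp
    have D: "Dl (Fin gt) (Fin g) = {?C, C1, ?C - C1}" using rd(1) True fCC1 sp(2) by auto
    have I: "Inf gt = Inf g" using rd(2) True fCC1 sp(2) unfolding Inf_def by auto
    have "card {?C, C1, ?C - C1} = 3"
    proof -
      have "?C \<noteq> C1" using aCC1 by blast
      moreover have "?C \<noteq> ?C - C1" using C1ne sp(4) by blast
      ultimately show ?thesis using C1CC1 by simp
    qed
    then have odd: "odd (card (Dl (Fin gt) (Fin g)))" using D by simp
    have fd: "finite (Fin gt - Fin g)" using rd(3) by simp
    have "Pg gt" unfolding Pg_def using igt I X fin_count[OF P3 fd] by simp
    moreover have "inftype gt \<longleftrightarrow> inftype g" unfolding inftype_def using I rg by simp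
    ultimately show ?thesis using D odd by simp
  next
    case False
    have "?C \<in> Inf g" unfolding Inf_def using False by simp
    then have XC: "X = ?C" using X by simp
    have iCC1: "infinite (?C - C1)" using False sp(2) by simp
    have e1: "{S\<in>{?C}. finite S} = {}" using False by auto
    have e2: "{S\<in>{C1, ?C - C1}. finite S} = {C1}" using iCC1 sp(2) by auto
    have D: "Dl (Fin gt) (Fin g) = {C1}" unfolding rd(1) e1 e2 by simp
    have e3: "{S\<in>{C1, ?C - C1}. infinite S} = {?C - C1}" using iCC1 sp(2) by auto
    have e4: "Inf g - {?C} = {}" using X XC by simp
    have I: "Inf gt = {?C - C1}" unfolding rd(2) e3 e4 by simp
    have fd: "finite (Fin gt - Fin g)" using rd(3) by simp
    have "Pg gt" unfolding Pg_def using igt I fin_count[OF P3 fd] by blast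
    moreover have "inftype gt \<longleftrightarrow> inftype g"
    proof -
      have "(?C - C1) - range g = ?C - range g" using sp(6) by blast
      then show ?thesis using inftype_single[OF I] inftype_single[OF X] XC rg by simp
    qed
    ultimately show ?thesis using D by simp
  qed
qed



lemma step_merge:
  fixes g :: "'a \<Rightarrow> 'a"
  assumes P: "Pg g" and fin: "finite (cls g a)" and b: "b \<notin> cls g a" and gt: "gt = g \<circ> transpose a b"
  shows "Pg gt \<and> (inftype gt \<longleftrightarrow> inftype g) \<and> finite (Dl (Fin gt) (Fin g)) \<and> odd (card (Dl (Fin gt) (Fin g)))"
proof -
  have g: "inj g" using P unfolding Pg_def by blast
  have P3: "\<forall>n>0. finite {S\<in>Fin g. card S = n}" using P unfolding Pg_def by blast
  obtain X where X: "Inf g = {X}" using P unfolding Pg_def by blast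
  let ?A = "cls g a" and ?B = "cls g b"
  have rep: "cycles gt = (cycles g - {?A, ?B}) \<union> {?A \<union> ?B}" using merge_cycles[OF g fin b gt] .
  have R: "{?A, ?B} \<subseteq> cycles g" by simp
  have UA: "?A \<union> ?B \<notin> cycles g"
  proof
    assume "?A \<union> ?B \<in> cycles g"
    then have "?A \<union> ?B = ?A" using cycles_mem[of "?A \<union> ?B" g a] by simp
    then show False using b cls_self[of b g] by blast
  qed
  have N: "{?A \<union> ?B} \<inter> cycles g = {}" using UA by simp
  note rd = rep_delta[OF rep R N]
  have aB: "a \<notin> ?B"
  proof
    assume "a \<in> ?B" then have "b \<in> ?A" using cls_sym by metis
    then show False using b by simp
  qed
  have rg: "range gt = range g" using range_gt[OF gt] .
  have igt: "inj gt" using g gt by (simp add: inj_compose)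
  have fd: "finite (Fin gt - Fin g)" using rd(3) by simp
  have cnt: "\<forall>n>0. finite {S\<in>Fin gt. card S = n}" using fin_count[OF P3 fd] .
  show ?thesis
  proof (cases "finite ?B")
    case True
    have e1: "{S\<in>{?A, ?B}. finite S} = {?A, ?B}" using True fin by auto
    have e2: "{S\<in>{?A \<union> ?B}. finite S} = {?A \<union> ?B}" using True fin by auto
    have D: "Dl (Fin gt) (Fin g) = {?A, ?B, ?A \<union> ?B}" unfolding rd(1) e1 e2 by auto
    have c3: "card {?A, ?B, ?A \<union> ?B} = 3"
    proof -
      have "?A \<noteq> ?B" using b cls_self[of b g] by blast
      moreover have "?A \<noteq> ?A \<union> ?B" using b cls_self[of b g] by blast
      moreover have "?B \<noteq> ?A \<union> ?B" using aB cls_self[of a g] by blast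
      ultimately show ?thesis by simp
    qed
    have e3: "{S\<in>{?A \<union> ?B}. infinite S} = {}" using True fin by auto
    have e4: "Inf g - {?A, ?B} = Inf g" unfolding Inf_def using True fin by auto
    have I: "Inf gt = Inf g" unfolding rd(2) e3 e4 by simp
    have "Pg gt" unfolding Pg_def using igt I X cnt by simp
    moreover have "inftype gt \<longleftrightarrow> inftype g" unfolding inftype_def using I rg by simp
    ultimately show ?thesis using D c3 by simp
  next
    case False
    have "?B \<in> Inf g" unfolding Inf_def using False by simp
    then have XB: "X = ?B" using X by simp
    have e1: "{S\<in>{?A, ?B}. finite S} = {?A}" using False fin by auto
    have e2: "{S\<in>{?A \<union> ?B}. finite S} = {}" using False by auto
    have D: "Dl (Fin gt) (Fin g) = {?A}" unfolding rd(1) e1 e2 by simp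
    have e3: "{S\<in>{?A \<union> ?B}. infinite S} = {?A \<union> ?B}" using False by auto
    have e4: "Inf g - {?A, ?B} = {}" using X XB by auto
    have I: "Inf gt = {?A \<union> ?B}" unfolding rd(2) e3 e4 by simp
    have "Pg gt" unfolding Pg_def using igt I cnt by blast
    moreover have "inftype gt \<longleftrightarrow> inftype g"
    proof -
      have "?A \<subseteq> range g" using finite_cls_range[OF g fin] by blast
      then have "(?A \<union> ?B) - range g = ?B - range g" by blast
      then show ?thesis using inftype_single[OF I] inftype_single[OF X] XB rg by simp
    qed
    ultimately show ?thesis using D by simp
  qed
qed

lemma step:
  fixes g :: "'a \<Rightarrow> 'a"
  assumes P: "Pg g" and ab: "a \<noteq> b" and gt: "gt = g \<circ> transpose a b"
  shows "Pg gt \<and> (inftype gt \<longleftrightarrow> inftype g) \<and> finite (Dl (Fin gt) (Fin g)) \<and> odd (card (Dl (Fin gt) (Fin g)))"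
proof -
  have g: "inj g" using P unfolding Pg_def by blast
  obtain X where X: "Inf g = {X}" using P unfolding Pg_def by blast
  have gt': "gt = g \<circ> transpose b a" using gt by (simp add: transpose_commute)
  show ?thesis
  proof (cases "b \<in> cls g a")
    case True
    then consider j where "b = (g^^j) a" | j where "(g^^j) b = a" using cls_inj_cases[OF g] by blast
    then show ?thesis
    proof cases
      case 1 then show ?thesis using step_split[OF P ab _ gt] by blast
    next
      case (2 j) then show ?thesis using step_split[OF P ab[symmetric] _ gt'] by metis
    qed
  next
    case False
    show ?thesis
    proof (cases "finite (cls g a)")
      case True show ?thesis by (rule step_merge[OF P True False gt])
    next
      case fa: False
      have "cls g a \<in> Inf g" unfolding Inf_def using fa by simp
      then have XA: "X = cls g a" using X by simp
      have fb: "finite (cls g b)"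
      proof (rule ccontr)
        assume "infinite (cls g b)"
        then have "cls g b \<in> Inf g" unfolding Inf_def by simp
        then have "cls g b = cls g a" using X XA by simp
        then show False using False cls_self[of b g] by blast
      qed
      have "a \<notin> cls g b" using False cls_sym by metis
      then show ?thesis using step_merge[OF P fb _ gt'] by blast
    qed
  qed
qed

lemma Dl_trans:
  assumes "finite (Dl X Y)" "finite (Dl Y Z)"
  shows "finite (Dl X Z) \<and> (even (card (Dl X Z)) \<longleftrightarrow> (even (card (Dl X Y)) \<longleftrightarrow> even (card (Dl Y Z))))"
proof -
  have eq: "Dl X Z = Dl (Dl X Y) (Dl Y Z)" unfolding Dl_def by blast
  let ?U = "Dl X Y" and ?V = "Dl Y Z"
  have fU: "finite ?U" and fV: "finite ?V" using assms by auto
  have fZ: "finite (Dl ?U ?V)" unfolding Dl_def[of ?U ?V] using fU fV by simp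
  have c: "card (Dl ?U ?V) + 2 * card (?U \<inter> ?V) = card ?U + card ?V"
  proof -
    have d1: "Dl ?U ?V = (?U - ?V) \<union> (?V - ?U)" unfolding Dl_def by simp
    have "card (Dl ?U ?V) = card (?U - ?V) + card (?V - ?U)"
      unfolding d1 by (rule card_Un_disjoint) (use fU fV in auto)
    moreover have "card ?U = card (?U - ?V) + card (?U \<inter> ?V)"
    proof -
      have "card (?U - ?V) = card ?U - card (?U \<inter> ?V)" using card_Diff_subset_Int[of ?U ?V] fU by simp
      moreover have "card (?U \<inter> ?V) \<le> card ?U" using card_mono[OF fU, of "?U \<inter> ?V"] by simp
      ultimately show ?thesis by simp
    qed
    moreover have "card ?V = card (?V - ?U) + card (?U \<inter> ?V)"
    proof -
      have "card (?V - ?U) = card ?V - card (?V \<inter> ?U)" using card_Diff_subset_Int[of ?V ?U] fV by simp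
      moreover have "card (?V \<inter> ?U) \<le> card ?V" using card_mono[OF fV, of "?V \<inter> ?U"] by simp
      ultimately show ?thesis by (simp add: Int_commute)
    qed
    ultimately show ?thesis by simp
  qed
  have "even (card (Dl ?U ?V)) \<longleftrightarrow> even (card ?U + card ?V)"
    using c by (metis even_add even_mult_iff even_numeral)
  then show ?thesis using eq fZ by simp
qed

lemma chain:
  fixes g :: "'a \<Rightarrow> 'a"
  assumes "swapidseq n q"
  shows "Pg g \<Longrightarrow> Pg (g \<circ> q) \<and> (inftype (g \<circ> q) \<longleftrightarrow> inftype g) \<and> finite (Dl (Fin (g \<circ> q)) (Fin g))
        \<and> (even (card (Dl (Fin (g \<circ> q)) (Fin g))) \<longleftrightarrow> even n)"
  using assms
proof (induction n q arbitrary: g rule: swapidseq.induct)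
  case id
  then show ?case unfolding Dl_def by simp
next
  case (comp_Suc n p a b)
  let ?gt = "g \<circ> transpose a b"
  have s: "Pg ?gt \<and> (inftype ?gt \<longleftrightarrow> inftype g) \<and> finite (Dl (Fin ?gt) (Fin g)) \<and> odd (card (Dl (Fin ?gt) (Fin g)))"
    using step[OF comp_Suc.prems comp_Suc.hyps(2) refl] .
  have ih: "Pg (?gt \<circ> p) \<and> (inftype (?gt \<circ> p) \<longleftrightarrow> inftype ?gt) \<and> finite (Dl (Fin (?gt \<circ> p)) (Fin ?gt))
        \<and> (even (card (Dl (Fin (?gt \<circ> p)) (Fin ?gt))) \<longleftrightarrow> even n)"
    using comp_Suc.IH[of ?gt] s by blast
  have e: "g \<circ> (transpose a b \<circ> p) = ?gt \<circ> p" by (simp add: o_assoc)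
  have t: "finite (Dl (Fin (?gt \<circ> p)) (Fin g)) \<and>
    (even (card (Dl (Fin (?gt \<circ> p)) (Fin g))) \<longleftrightarrow> (even (card (Dl (Fin (?gt \<circ> p)) (Fin ?gt))) \<longleftrightarrow> even (card (Dl (Fin ?gt) (Fin g)))))"
    using Dl_trans ih s by blast
  have en: "even (Suc n) \<longleftrightarrow> \<not> even n" by simp
  show ?case unfolding e using ih s t en by blast
qed



lemma iso_funpow: assumes "\<forall>x. k (F x) = G (k x)" shows "k ((F^^m) x) = (G^^m) (k x)"
  by (induction m) (auto simp: assms)

lemma iso_cls:
  assumes "bij k" "\<forall>x. k (F x) = G (k x)"
  shows "cls G (k x) = k ` cls F x"
proof (intro equalityI subsetI)
  fix y assume y: "y \<in> cls G (k x)"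
  obtain z where z: "y = k z" using assms(1) by (metis bij_pointE)
  obtain m n where "(G^^m) (k x) = (G^^n) y" using y unfolding cls_def by blast
  then have "k ((F^^m) x) = k ((F^^n) z)" using iso_funpow[OF assms(2)] z by simp
  then have "(F^^m) x = (F^^n) z" using assms(1) by (simp add: bij_is_inj inj_eq)
  then have "z \<in> cls F x" unfolding cls_def by blast
  then show "y \<in> k ` cls F x" using z by blast
next
  fix y assume "y \<in> k ` cls F x"
  then obtain z where z: "y = k z" "z \<in> cls F x" by blast
  then obtain m n where "(F^^m) x = (F^^n) z" unfolding cls_def by blast
  then have "(G^^m) (k x) = (G^^n) y" using iso_funpow[OF assms(2)] z by metis
  then show "y \<in> cls G (k x)" unfolding cls_def by blast
qed

lemma iso_cycles:
  assumes "bij k" "\<forall>x. k (F x) = G (k x)"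
  shows "cycles G = (\<lambda>S. k ` S) ` cycles F"
proof -
  have "cycles G = range (cls G)" by (rule cycles_cls)
  also have "\<dots> = cls G ` range k" using assms(1) by (simp add: bij_is_surj)
  also have "\<dots> = range (\<lambda>x. cls G (k x))" by (simp add: image_comp comp_def)
  also have "\<dots> = range (\<lambda>x. k ` cls F x)" using iso_cls[OF assms] by simp
  also have "\<dots> = (\<lambda>S. k ` S) ` range (cls F)" by (simp add: image_comp comp_def)
  also have "\<dots> = (\<lambda>S. k ` S) ` cycles F" using cycles_cls by metis
  finally show ?thesis .
qed

lemma filter_image: "{T \<in> h ` A. P T} = h ` {S\<in>A. P (h S)}" by auto

lemma ecard_image: "inj_on h A \<Longrightarrow> ecard (h ` A) = ecard A"
  unfolding ecard_def by (simp add: card_image finite_image_iff)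

lemma iso_invariants:
  assumes "bij k" "\<forall>x. k (F x) = G (k x)"
  shows "Cn n F = Cn n G" "C_fwd F = C_fwd G" "C_open F = C_open G"
proof -
  have ik: "inj k" using assms(1) bij_is_inj by blast
  have ii: "inj_on (\<lambda>S. k ` S) A" for A using ik by (simp add: inj_on_def inj_image_eq_iff)
  have cy: "cycles G = (\<lambda>S. k ` S) ` cycles F" using iso_cycles[OF assms] .
  have rg: "range G = k ` range F"
  proof -
    have "range G = G ` range k" using assms(1) by (simp add: bij_is_surj)
    also have "\<dots> = range (\<lambda>x. G (k x))" by (simp add: image_comp comp_def)
    also have "\<dots> = range (\<lambda>x. k (F x))" using assms(2) by simp
    also have "\<dots> = k ` range F" by (simp add: image_comp comp_def)
    finally show ?thesis .
  qed
  have fin: "finite (k ` S) = finite S" for S using ik by (simp add: finite_image_iff inj_on_subset)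
  have crd: "card (k ` S) = card S" for S using ik by (simp add: card_image inj_on_subset)
  have dif: "k ` S - range G = k ` (S - range F)" for S using rg ik by (simp add: image_set_diff)
  have e1: "{S\<in>cycles G. finite S \<and> card S = n} = (\<lambda>S. k ` S) ` {S\<in>cycles F. finite S \<and> card S = n}"
    unfolding cy using fin crd by auto
  show "Cn n F = Cn n G" unfolding Cn_def e1 ecard_image[OF ii] ..
  have pr: "(k ` S - range G \<noteq> {}) = (S - range F \<noteq> {})" for S using dif by simp
  have e2: "fwd_cycles G = (\<lambda>S. k ` S) ` fwd_cycles F"
    unfolding fwd_cycles_def cy filter_image by (simp only: fin pr)
  show "C_fwd F = C_fwd G" unfolding C_fwd_def e2 ecard_image[OF ii] ..
  have e3: "open_cycles G = (\<lambda>S. k ` S) ` open_cycles F"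
    unfolding open_cycles_def cy filter_image by (simp only: fin pr)
  show "C_open F = C_open G" unfolding C_open_def e3 ecard_image[OF ii] ..
qed

lemma approx_even_cong:
  assumes "\<forall>n. Cn n F = Cn n F'" "C_fwd F = C_fwd F'" "C_open F = C_open F'"
  shows "approx_even F g \<longleftrightarrow> approx_even F' g"
  unfolding approx_even_def approx_fin_def using assms by simp



lemma fwd_Inf: "fwd_cycles g = {S\<in>Inf g. S - range g \<noteq> {}}"
  unfolding fwd_cycles_def Inf_def by auto
lemma open_Inf: "open_cycles g = {S\<in>Inf g. S - range g = {}}"
  unfolding open_cycles_def Inf_def by auto

lemma C_fwd_Pg: "Pg g \<Longrightarrow> C_fwd g = (if inftype g then 1 else 0)"
proof -
  assume "Pg g"
  then obtain X where X: "Inf g = {X}" unfolding Pg_def by blast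
  show ?thesis
  proof (cases "X - range g \<noteq> {}")
    case True
    then have "fwd_cycles g = {X}" unfolding fwd_Inf X by auto
    then show ?thesis unfolding C_fwd_def ecard_def using True inftype_single[OF X] by (simp add: one_enat_def)
  next
    case False
    then have "fwd_cycles g = {}" unfolding fwd_Inf X by auto
    then show ?thesis unfolding C_fwd_def ecard_def using False inftype_single[OF X] by (simp add: zero_enat_def)
  qed
qed

lemma C_open_Pg: "Pg g \<Longrightarrow> C_open g = (if inftype g then 0 else 1)"
proof -
  assume "Pg g"
  then obtain X where X: "Inf g = {X}" unfolding Pg_def by blast
  show ?thesis
  proof (cases "X - range g \<noteq> {}")
    case True
    then have "open_cycles g = {}" unfolding open_Inf X by auto
    then show ?thesis unfolding C_open_def ecard_def using True inftype_single[OF X] by (simp add: zero_enat_def)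
  next
    case False
    then have "open_cycles g = {X}" unfolding open_Inf X by auto
    then show ?thesis unfolding C_open_def ecard_def using False inftype_single[OF X] by (simp add: one_enat_def)
  qed
qed

lemma Cn_Fin: "Cn n g = ecard {S\<in>Fin g. card S = n}"
  unfolding Cn_def Fin_def by (metis (mono_tags, lifting) mem_Collect_eq)

lemma Cn_cnt: "finite {S\<in>Fin g. card S = n} \<Longrightarrow> Cn n g = enat (card {S\<in>Fin g. card S = n})"
  unfolding Cn_Fin ecard_def by simp

lemma card_split_int:
  assumes "finite P" "finite Q"
  shows "int (card P) - int (card Q) = int (card (P - Q)) - int (card (Q - P))"
proof -
  have "card (P - Q) = card P - card (P \<inter> Q)" using card_Diff_subset_Int[of P Q] assms by simp
  moreover have "card (P \<inter> Q) \<le> card P" using card_mono[OF assms(1), of "P \<inter> Q"] by simp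
  moreover have "card (Q - P) = card Q - card (Q \<inter> P)" using card_Diff_subset_Int[of Q P] assms by simp
  moreover have "card (Q \<inter> P) \<le> card Q" using card_mono[OF assms(2), of "Q \<inter> P"] by simp
  ultimately show ?thesis by (simp add: Int_commute)
qed

lemma Fin_card_pos: "S \<in> Fin g \<Longrightarrow> 0 < card S"
  unfolding Fin_def using cycles_nonempty by (auto simp: card_gt_0_iff)

lemma approx_from_Dl:
  assumes PF: "Pg F" and Pg: "Pg g" and fD: "finite (Dl (Fin F) (Fin g))"
    and eD: "even (card (Dl (Fin F) (Fin g)))" and it: "inftype F \<longleftrightarrow> inftype g"
  shows "approx_even F g"
proof -
  define A where "A = Fin F - Fin g"
  define B where "B = Fin g - Fin F"
  have fA: "finite A" and fB: "finite B" using fD unfolding A_def B_def Dl_def by auto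
  have cF: "\<forall>n>0. finite {S\<in>Fin F. card S = n}" using PF unfolding Pg_def by blast
  have cg: "\<forall>n>0. finite {S\<in>Fin g. card S = n}" using Pg unfolding Pg_def by blast
  define a where "a n = card {S\<in>A. card S = n}" for n
  define b where "b n = card {S\<in>B. card S = n}" for n
  have diff: "int (the_enat (Cn n F)) - int (the_enat (Cn n g)) = int (a n) - int (b n)" if "0 < n" for n
  proof -
    have "int (the_enat (Cn n F)) - int (the_enat (Cn n g)) =
          int (card {S\<in>Fin F. card S = n}) - int (card {S\<in>Fin g. card S = n})"
    proof -
      have "Cn n F = enat (card {S\<in>Fin F. card S = n})" using Cn_cnt cF that by blast
      moreover have "Cn n g = enat (card {S\<in>Fin g. card S = n})" using Cn_cnt cg that by blast
      ultimately show ?thesis by simp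
    qed
    also have "\<dots> = int (card ({S\<in>Fin F. card S = n} - {S\<in>Fin g. card S = n}))
                    - int (card ({S\<in>Fin g. card S = n} - {S\<in>Fin F. card S = n}))"
      by (rule card_split_int) (use cF cg that in auto)
    also have "{S\<in>Fin F. card S = n} - {S\<in>Fin g. card S = n} = {S\<in>A. card S = n}" unfolding A_def by auto
    also have "{S\<in>Fin g. card S = n} - {S\<in>Fin F. card S = n} = {S\<in>B. card S = n}" unfolding B_def by auto
    finally show ?thesis unfolding a_def b_def .
  qed
  have CnF: "Cn n F \<noteq> \<infinity>" if "0 < n" for n
  proof -
    have "Cn n F = enat (card {S\<in>Fin F. card S = n})" using Cn_cnt cF that by blast
    then show ?thesis by simp
  qed
  have Cng: "Cn n g \<noteq> \<infinity>" if "0 < n" for n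
  proof -
    have "Cn n g = enat (card {S\<in>Fin g. card S = n})" using Cn_cnt cg that by blast
    then show ?thesis by simp
  qed
  define D where "D = {n. 0 < n \<and> Cn n F \<noteq> Cn n g}"
  define M where "M = card ` (A \<union> B)"
  have fM: "finite M" unfolding M_def using fA fB by simp
  have M0: "0 \<notin> M" unfolding M_def A_def B_def using Fin_card_pos by fastforce
  have DM: "D \<subseteq> M"
  proof
    fix n assume "n \<in> D"
    then have n: "0 < n" "Cn n F \<noteq> Cn n g" unfolding D_def by auto
    obtain x y where "Cn n F = enat x" "Cn n g = enat y"
      using CnF[OF n(1)] Cng[OF n(1)] by (meson not_infinity_eq)
    then have "int (the_enat (Cn n F)) \<noteq> int (the_enat (Cn n g))" using n by auto
    then have "a n \<noteq> b n" using diff[OF n(1)] by simp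
    then have "{S\<in>A. card S = n} \<noteq> {} \<or> {S\<in>B. card S = n} \<noteq> {}"
    proof (rule contrapos_pp)
      assume "\<not> ({S\<in>A. card S = n} \<noteq> {} \<or> {S\<in>B. card S = n} \<noteq> {})"
      then have e1: "{S\<in>A. card S = n} = {}" and e2: "{S\<in>B. card S = n} = {}" by auto
      show "\<not> a n \<noteq> b n" unfolding a_def b_def e1 e2 by simp
    qed
    then show "n \<in> M" unfolding M_def by blast
  qed
  have fDs: "finite D" using finite_subset[OF DM fM] .
  have sumD: "(\<Sum>n\<in>D. int (the_enat (Cn n F)) - int (the_enat (Cn n g))) = (\<Sum>n\<in>M. int (a n) - int (b n))"
  proof -
    have "(\<Sum>n\<in>D. int (the_enat (Cn n F)) - int (the_enat (Cn n g))) = (\<Sum>n\<in>D. int (a n) - int (b n))"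
      using diff unfolding D_def by (intro sum.cong) auto
    also have "\<dots> = (\<Sum>n\<in>M. int (a n) - int (b n))"
    proof (rule sum.mono_neutral_left[OF fM DM], intro ballI)
      fix n assume "n \<in> M - D"
      then have nM: "n \<in> M" "n \<notin> D" by auto
      then have "n \<noteq> 0" using M0 by metis
      then have "0 < n" by simp
      moreover then have "Cn n F = Cn n g" using nM(2) unfolding D_def by auto
      ultimately have "0 < n" "Cn n F = Cn n g" by auto
      then show "int (a n) - int (b n) = 0" using diff[of n] by simp
    qed
    finally show ?thesis .
  qed
  have sa: "(\<Sum>n\<in>M. a n) = card A"
  proof -
    have "(\<Sum>n\<in>M. a n) = (\<Sum>n\<in>M. \<Sum>S\<in>{S\<in>A. card S = n}. 1)" unfolding a_def by simp
    also have "\<dots> = (\<Sum>S\<in>A. 1)" by (rule sum.group) (use fA fM in \<open>auto simp: M_def\<close>)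
    finally show ?thesis by simp
  qed
  have sb: "(\<Sum>n\<in>M. b n) = card B"
  proof -
    have "(\<Sum>n\<in>M. b n) = (\<Sum>n\<in>M. \<Sum>S\<in>{S\<in>B. card S = n}. 1)" unfolding b_def by simp
    also have "\<dots> = (\<Sum>S\<in>B. 1)" by (rule sum.group) (use fB fM in \<open>auto simp: M_def\<close>)
    finally show ?thesis by simp
  qed
  have "(\<Sum>n\<in>M. int (a n) - int (b n)) = int (card A) - int (card B)"
    by (simp add: sum_subtractf sa[symmetric] sb[symmetric])
  moreover have "card (Dl (Fin F) (Fin g)) = card A + card B"
    unfolding Dl_def A_def B_def by (rule card_Un_disjoint) (use fA fB in \<open>auto simp: A_def B_def\<close>)
  ultimately have ev: "even (\<Sum>n\<in>D. int (the_enat (Cn n F)) - int (the_enat (Cn n g)))"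
    using sumD eD by simp
  have "C_open F = C_open g" using C_open_Pg[OF PF] C_open_Pg[OF Pg] it by simp
  moreover have "C_fwd F = C_fwd g" using C_fwd_Pg[OF PF] C_fwd_Pg[OF Pg] it by simp
  ultimately show ?thesis unfolding approx_even_def approx_fin_def
    using fDs ev CnF Cng unfolding D_def by blast
qed



lemma backward:
  fixes g :: "'a \<Rightarrow> 'a"
  assumes Pg: "Pg g" and h: "bij h" and h1: "h1 \<in> Alt" and h2: "h2 \<in> Alt"
    and f: "f = inv h \<circ> h2 \<circ> g \<circ> h1 \<circ> h"
  shows "approx_even f g"
proof -
  let ?G = "h2 \<circ> g \<circ> h1"
  let ?q = "h1 \<circ> h2"
  have p1: "permutation h1" "evenperm h1" using h1 unfolding Alt_def by auto
  have p2: "permutation h2" "evenperm h2" using h2 unfolding Alt_def by auto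
  have pq: "permutation ?q" using permutation_compose[OF p1(1) p2(1)] .
  have eq: "evenperm ?q" using evenperm_comp[OF p1(1) p2(1)] p1(2) p2(2) by simp
  obtain n where n: "swapidseq n ?q" using pq unfolding permutation_def by blast
  have en: "even n" using evenperm_unique[OF n refl] eq by simp
  have ch: "Pg (g \<circ> ?q) \<and> (inftype (g \<circ> ?q) \<longleftrightarrow> inftype g) \<and> finite (Dl (Fin (g \<circ> ?q)) (Fin g))
        \<and> (even (card (Dl (Fin (g \<circ> ?q)) (Fin g))) \<longleftrightarrow> even n)"
    using chain[OF n Pg] .
  have ae: "approx_even (g \<circ> ?q) g" using approx_from_Dl[OF _ Pg] ch en by blast
  have iso1: "\<forall>x. h (f x) = ?G (h x)"
  proof
    fix x show "h (f x) = ?G (h x)" using h f by (simp add: bij_is_surj surj_f_inv_f)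
  qed
  have bh2: "bij h2" using permutation_bijective[OF p2(1)] .
  have iso2: "\<forall>x. h2 ((g \<circ> ?q) x) = ?G (h2 x)" by simp
  note i1 = iso_invariants[OF h iso1] and i2 = iso_invariants[OF bh2 iso2]
  have "\<forall>n. Cn n f = Cn n (g \<circ> ?q)" using i1(1) i2(1) by (simp add: comp_def)
  moreover have "C_fwd f = C_fwd (g \<circ> ?q)" using i1(2) i2(2) by (simp add: comp_def)
  moreover have "C_open f = C_open (g \<circ> ?q)" using i1(3) i2(3) by (simp add: comp_def)
  ultimately show ?thesis using approx_even_cong ae by blast
qed



definition rho where
  "rho f g \<psi> bf bg x y \<longleftrightarrow> \<psi> (cls f x) = cls g y \<and>
     (\<exists>m n. (f^^m) (bf (cls f x)) = (f^^n) x \<and> (g^^m) (bg (cls g y)) = (g^^n) y)"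

lemma funpow_Suc_apply: fixes f :: "'a \<Rightarrow> 'a" shows "(f^^(Suc m)) x = (f^^m) (f x)"
  by (metis comp_apply funpow_Suc_right)

lemma fp_shift: fixes f :: "'a \<Rightarrow> 'a"
  assumes "(f^^m) s = (f^^n) x" shows "(f^^(m+k)) s = (f^^(k+n)) x"
proof -
  have "(f^^(m+k)) s = (f^^(k+m)) s" by (simp add: add.commute)
  also have "\<dots> = (f^^k) ((f^^m) s)" by (rule funpow_add_apply)
  also have "\<dots> = (f^^k) ((f^^n) x)" using assms by simp
  also have "\<dots> = (f^^(k+n)) x" by (rule funpow_add_apply[symmetric])
  finally show ?thesis .
qed

lemma conj_rel:
  fixes f g :: "'a \<Rightarrow> 'a"
  assumes f: "inj f" and g: "inj g"
    and psi: "\<forall>S\<in>cycles f. \<psi> S \<in> cycles g"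
    and bf: "\<forall>S\<in>cycles f. bf S \<in> S" and bg: "\<forall>T\<in>cycles g. bg T \<in> T"
    and C2: "\<forall>S\<in>cycles f. \<forall>a b. (f^^a) (bf S) = (f^^b) (bf S) \<longleftrightarrow> (g^^a) (bg (\<psi> S)) = (g^^b) (bg (\<psi> S))"
    and C3: "\<forall>S\<in>cycles f. (S \<subseteq> range f \<and> \<psi> S \<subseteq> range g) \<or> (bf S \<notin> range f \<and> bg (\<psi> S) \<notin> range g)"
  shows "\<exists>!y. rho f g \<psi> bf bg x y"
proof -
  define S where "S = cls f x"
  define T where "T = \<psi> S"
  define s where "s = bf S"
  define t where "t = bg T"
  have S: "S \<in> cycles f" unfolding S_def by simp
  have T: "T \<in> cycles g" unfolding T_def using psi S by blast
  have sS: "s \<in> S" unfolding s_def using bf S by blast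
  have tT: "t \<in> T" unfolding t_def using bg T by blast
  have Tt: "T = cls g t" using cycles_mem[OF T tT] .
  have xs: "x \<in> cls f s" using sS unfolding S_def by (metis cls_sym)
  have ex: "\<exists>y. rho f g \<psi> bf bg x y"
  proof -
    consider j where "x = (f^^j) s" | j where "(f^^j) x = s" using cls_inj_cases[OF f xs] by blast
    then show ?thesis
    proof cases
      case (1 j)
      define y where "y = (g^^j) t"
      have "y \<in> cls g t" unfolding y_def by (rule funpow_in_cls)
      then have cy: "cls g y = T" using Tt cls_eq by metis
      have e1: "bf (cls f x) = s" "bg (cls g y) = t" "\<psi> (cls f x) = cls g y"
        using cy unfolding s_def S_def t_def T_def by auto
      have "(f^^j) (bf (cls f x)) = (f^^0) x \<and> (g^^j) (bg (cls g y)) = (g^^0) y"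
        using e1 1 y_def by simp
      then have "rho f g \<psi> bf bg x y" unfolding rho_def using e1 by blast
      then show ?thesis by blast
    next
      case (2 j)
      have "(S \<subseteq> range f \<and> T \<subseteq> range g) \<or> (s \<notin> range f \<and> t \<notin> range g)"
        using C3 S unfolding T_def s_def t_def by blast
      then show ?thesis
      proof
        assume "S \<subseteq> range f \<and> T \<subseteq> range g"
        then obtain y where y: "y \<in> T" "(g^^j) y = t" using cls_range_preimage[of g t t j] Tt tT by auto
        then have cy: "cls g y = T" using Tt cls_eq by metis
        have e1: "bf (cls f x) = s" "bg (cls g y) = t" "\<psi> (cls f x) = cls g y"
          using cy unfolding s_def S_def t_def T_def by auto
        have "(f^^0) (bf (cls f x)) = (f^^j) x \<and> (g^^0) (bg (cls g y)) = (g^^j) y"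
          using e1 2 y by simp
        then have "rho f g \<psi> bf bg x y" unfolding rho_def using e1 by blast
        then show ?thesis by blast
      next
        assume nr: "s \<notin> range f \<and> t \<notin> range g"
        have "j = 0"
        proof (rule ccontr)
          assume "j \<noteq> 0"
          then obtain j' where "j = Suc j'" using not0_implies_Suc by blast
          then have "s = f ((f^^j') x)" using 2 by simp
          then show False using nr by blast
        qed
        then have xs': "x = s" using 2 by simp
        have cy: "cls g t = T" using Tt by simp
        have e1: "bf (cls f x) = s" "bg (cls g t) = t" "\<psi> (cls f x) = cls g t"
          using cy unfolding s_def S_def t_def T_def by auto
        have "(f^^0) (bf (cls f x)) = (f^^0) x \<and> (g^^0) (bg (cls g t)) = (g^^0) t"
          using e1 xs' by simp
        then have "rho f g \<psi> bf bg x t" unfolding rho_def using e1 by blast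
        then show ?thesis by blast
      qed
    qed
  qed
  have un: "y = y'" if r1: "rho f g \<psi> bf bg x y" and r2: "rho f g \<psi> bf bg x y'" for y y'
  proof -
    have cy: "cls g y = T" and cy': "cls g y' = T" using r1 r2 unfolding rho_def T_def S_def by auto
    obtain m n where mn: "(f^^m) s = (f^^n) x" "(g^^m) t = (g^^n) y"
      using r1 cy unfolding rho_def S_def[symmetric] s_def t_def by auto
    obtain m' n' where mn': "(f^^m') s = (f^^n') x" "(g^^m') t = (g^^n') y'"
      using r2 cy' unfolding rho_def S_def[symmetric] s_def t_def by auto
    have "(f^^(m+n')) s = (f^^(n'+n)) x" using fp_shift[OF mn(1)] .
    moreover have "(f^^(m'+n)) s = (f^^(n+n')) x" using fp_shift[OF mn'(1)] .
    ultimately have "(f^^(m+n')) s = (f^^(m'+n)) s" by (simp add: add.commute)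
    then have "(g^^(m+n')) t = (g^^(m'+n)) t" using C2 S unfolding s_def t_def T_def by blast
    moreover have "(g^^(m+n')) t = (g^^(n'+n)) y" using fp_shift[OF mn(2)] .
    moreover have "(g^^(m'+n)) t = (g^^(n+n')) y'" using fp_shift[OF mn'(2)] .
    ultimately have "(g^^(n+n')) y = (g^^(n+n')) y'" by (simp add: add.commute)
    then show "y = y'" using funpow_cancel[OF g] by blast
  qed
  show ?thesis using ex un by blast
qed



lemma conj_exists:
  fixes f g :: "'a \<Rightarrow> 'a"
  assumes f: "inj f" and g: "inj g"
    and psi: "bij_betw \<psi> (cycles f) (cycles g)"
    and bf: "\<forall>S\<in>cycles f. bf S \<in> S" and bg: "\<forall>T\<in>cycles g. bg T \<in> T"
    and C2: "\<forall>S\<in>cycles f. \<forall>a b. (f^^a) (bf S) = (f^^b) (bf S) \<longleftrightarrow> (g^^a) (bg (\<psi> S)) = (g^^b) (bg (\<psi> S))"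
    and C3: "\<forall>S\<in>cycles f. (S \<subseteq> range f \<and> \<psi> S \<subseteq> range g) \<or> (bf S \<notin> range f \<and> bg (\<psi> S) \<notin> range g)"
  shows "\<exists>k. bij k \<and> (\<forall>x. k (f x) = g (k x))"
proof -
  define \<psi>' where "\<psi>' = inv_into (cycles f) \<psi>"
  have psi1: "\<forall>S\<in>cycles f. \<psi> S \<in> cycles g" using psi bij_betwE by blast
  have injp: "inj_on \<psi> (cycles f)" using psi unfolding bij_betw_def by blast
  have imp: "\<psi> ` cycles f = cycles g" using psi unfolding bij_betw_def by blast
  have psi'1: "\<forall>T\<in>cycles g. \<psi>' T \<in> cycles f"
  proof
    fix T assume "T \<in> cycles g"
    then have "T \<in> \<psi> ` cycles f" using imp by simp
    then show "\<psi>' T \<in> cycles f" unfolding \<psi>'_def by (rule inv_into_into)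
  qed
  have pp: "\<forall>T\<in>cycles g. \<psi> (\<psi>' T) = T"
  proof
    fix T assume "T \<in> cycles g"
    then have "T \<in> \<psi> ` cycles f" using imp by simp
    then show "\<psi> (\<psi>' T) = T" unfolding \<psi>'_def by (rule f_inv_into_f)
  qed
  have eqv: "\<psi> S = T \<longleftrightarrow> \<psi>' T = S" if S: "S \<in> cycles f" and T: "T \<in> cycles g" for S T
  proof
    assume "\<psi> S = T"
    then show "\<psi>' T = S" unfolding \<psi>'_def using inv_into_f_f[OF injp S] by simp
  next
    assume "\<psi>' T = S"
    then show "\<psi> S = T" using pp T by auto
  qed
  have C2': "\<forall>T\<in>cycles g. \<forall>a b. (g^^a) (bg T) = (g^^b) (bg T) \<longleftrightarrow> (f^^a) (bf (\<psi>' T)) = (f^^b) (bf (\<psi>' T))"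
  proof (intro ballI allI)
    fix T a b assume T: "T \<in> cycles g"
    have "(f^^a) (bf (\<psi>' T)) = (f^^b) (bf (\<psi>' T)) \<longleftrightarrow> (g^^a) (bg (\<psi> (\<psi>' T))) = (g^^b) (bg (\<psi> (\<psi>' T)))"
      using C2 psi'1 T by blast
    then show "(g^^a) (bg T) = (g^^b) (bg T) \<longleftrightarrow> (f^^a) (bf (\<psi>' T)) = (f^^b) (bf (\<psi>' T))"
      using pp T by simp
  qed
  have C3': "\<forall>T\<in>cycles g. (T \<subseteq> range g \<and> \<psi>' T \<subseteq> range f) \<or> (bg T \<notin> range g \<and> bf (\<psi>' T) \<notin> range f)"
  proof
    fix T assume T: "T \<in> cycles g"
    have "(\<psi>' T \<subseteq> range f \<and> \<psi> (\<psi>' T) \<subseteq> range g) \<or> (bf (\<psi>' T) \<notin> range f \<and> bg (\<psi> (\<psi>' T)) \<notin> range g)"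
      using C3 psi'1 T by blast
    then show "(T \<subseteq> range g \<and> \<psi>' T \<subseteq> range f) \<or> (bg T \<notin> range g \<and> bf (\<psi>' T) \<notin> range f)"
      using pp T by auto
  qed
  have R1: "\<exists>!y. rho f g \<psi> bf bg x y" for x using conj_rel[OF f g psi1 bf bg C2 C3] .
  have R2: "\<exists>!x. rho g f \<psi>' bg bf y x" for y using conj_rel[OF g f psi'1 bg bf C2' C3'] .
  have sw: "rho f g \<psi> bf bg x y \<longleftrightarrow> rho g f \<psi>' bg bf y x" for x y
    unfolding rho_def using eqv[of "cls f x" "cls g y"] cls_in_cycles by metis
  have R2': "\<exists>!x. rho f g \<psi> bf bg x y" for y using R2[of y] sw by simp
  define k where "k x = (THE y. rho f g \<psi> bf bg x y)" for x
  have kr: "rho f g \<psi> bf bg x (k x)" for x unfolding k_def using R1 by (rule theI')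
  have ku: "rho f g \<psi> bf bg x y \<Longrightarrow> k x = y" for x y using R1 kr by blast
  have "inj k"
  proof (rule injI)
    fix x x' assume "k x = k x'"
    then show "x = x'" using kr[of x] kr[of x'] R2'[of "k x"] by auto
  qed
  moreover have "surj k"
  proof -
    have "y \<in> range k" for y using R2'[of y] ku by blast
    then show ?thesis by blast
  qed
  moreover have "k (f x) = g (k x)" for x
  proof -
    obtain m n where r: "\<psi> (cls f x) = cls g (k x)" "(f^^m) (bf (cls f x)) = (f^^n) x"
      "(g^^m) (bg (cls g (k x))) = (g^^n) (k x)" using kr[of x] unfolding rho_def by blast
    have cf: "cls f (f x) = cls f x" using funpow_in_cls[where f=f and j=1 and x=x] cls_eq by fastforce
    have cg: "cls g (g (k x)) = cls g (k x)" using funpow_in_cls[where f=g and j=1 and x="k x"] cls_eq by fastforce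
    have B: "(f^^(Suc m)) (bf (cls f (f x))) = (f^^n) (f x)" using r(2) cf by (simp add: funpow_comm)
    have C: "(g^^(Suc m)) (bg (cls g (g (k x)))) = (g^^n) (g (k x))" using r(3) cg by (simp add: funpow_comm)
    have A: "\<psi> (cls f (f x)) = cls g (g (k x))" using r(1) cf cg by simp
    have ex: "\<exists>m n. (f^^m) (bf (cls f (f x))) = (f^^n) (f x) \<and> (g^^m) (bg (cls g (g (k x)))) = (g^^n) (g (k x))"
      by (rule exI[of _ "Suc m"], rule exI[of _ n], rule conjI[OF B C])
    have "rho f g \<psi> bf bg (f x) (g (k x))" unfolding rho_def by (rule conjI[OF A ex])
    then show ?thesis using ku by blast
  qed
  ultimately show ?thesis by (intro exI[of _ k]) (auto simp: bij_def)
qed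



lemma Fin_cycles: "S \<in> Fin g \<longleftrightarrow> S \<in> cycles g \<and> finite S"
  unfolding Fin_def by simp

lemma Inf_mem: "Inf g = {X} \<Longrightarrow> S \<in> cycles g \<Longrightarrow> infinite S \<Longrightarrow> S = X"
  unfolding Inf_def by blast

lemma conj_same_type:
  fixes f g :: "'a \<Rightarrow> 'a"
  assumes Pf: "Pg f" and Pg: "Pg g"
    and cnt: "\<forall>n>0. card {S\<in>Fin f. card S = n} = card {S\<in>Fin g. card S = n}"
    and it: "inftype f \<longleftrightarrow> inftype g"
  shows "\<exists>k. bij k \<and> (\<forall>x. k (f x) = g (k x))"
proof -
  have f: "inj f" and g: "inj g" using Pf Pg unfolding Pg_def by auto
  obtain Xf where Xf: "Inf f = {Xf}" using Pf unfolding Pg_def by blast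
  obtain Xg where Xg: "Inf g = {Xg}" using Pg unfolding Pg_def by blast
  have Xf1: "Xf \<in> cycles f" "infinite Xf" using Xf unfolding Inf_def by auto
  have Xg1: "Xg \<in> cycles g" "infinite Xg" using Xg unfolding Inf_def by auto
  have ff: "\<forall>n>0. finite {S\<in>Fin f. card S = n}" using Pf unfolding Pg_def by blast
  have fg: "\<forall>n>0. finite {S\<in>Fin g. card S = n}" using Pg unfolding Pg_def by blast
  have exphi: "\<exists>\<phi>. bij_betw \<phi> {S\<in>Fin f. card S = n} {S\<in>Fin g. card S = n}" if "0 < n" for n
    by (rule finite_same_card_bij) (use ff fg cnt that in auto)
  define \<phi> where "\<phi> n = (SOME \<phi>. bij_betw \<phi> {S\<in>Fin f. card S = n} {S\<in>Fin g. card S = n})" for n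
  have phi: "bij_betw (\<phi> n) {S\<in>Fin f. card S = n} {S\<in>Fin g. card S = n}" if "0 < n" for n
    unfolding \<phi>_def using someI_ex[OF exphi[OF that]] .
  define \<psi> where "\<psi> S = (if finite S then \<phi> (card S) S else Xg)" for S
  have cpos: "0 < card S" if "S \<in> Fin f" for S using Fin_card_pos that by blast
  have psiF: "\<psi> S \<in> Fin g \<and> card (\<psi> S) = card S" if "S \<in> Fin f" for S
  proof -
    have "S \<in> {S\<in>Fin f. card S = card S}" using that by simp
    then have "\<phi> (card S) S \<in> {T\<in>Fin g. card T = card S}" using phi[OF cpos[OF that]] bij_betwE by blast
    then show ?thesis unfolding \<psi>_def using that Fin_cycles by auto
  qed
  have psiI: "\<psi> S = Xg" if "infinite S" for S unfolding \<psi>_def using that by simp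
  have bij: "bij_betw \<psi> (cycles f) (cycles g)"
  proof (rule bij_betw_imageI)
    show "inj_on \<psi> (cycles f)"
    proof (rule inj_onI)
      fix S S' assume S: "S \<in> cycles f" and S': "S' \<in> cycles f" and e: "\<psi> S = \<psi> S'"
      show "S = S'"
      proof (cases "finite S")
        case True
        then have SF: "S \<in> Fin f" using S Fin_cycles by blast
        show ?thesis
        proof (cases "finite S'")
          case True
          then have SF': "S' \<in> Fin f" using S' Fin_cycles by blast
          have "card S = card S'" using psiF[OF SF] psiF[OF SF'] e by simp
          then have "S' \<in> {T\<in>Fin f. card T = card S}" using SF' by simp
          moreover have "S \<in> {T\<in>Fin f. card T = card S}" using SF by simp
          moreover have "\<phi> (card S) S = \<phi> (card S) S'" using e \<open>finite S\<close> True \<open>card S = card S'\<close>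
            unfolding \<psi>_def by simp
          ultimately show ?thesis using phi[OF cpos[OF SF]] unfolding bij_betw_def inj_on_def by blast
        next
          case False
          then have "\<psi> S' = Xg" using psiI by simp
          moreover have "finite (\<psi> S)" using psiF[OF SF] Fin_cycles by blast
          ultimately show ?thesis using e Xg1 by simp
        qed
      next
        case False
        then have "S = Xf" using Inf_mem[OF Xf S] by simp
        show ?thesis
        proof (cases "finite S'")
          case True
          then have SF': "S' \<in> Fin f" using S' Fin_cycles by blast
          have "finite (\<psi> S')" using psiF[OF SF'] Fin_cycles by blast
          moreover have "\<psi> S = Xg" using psiI False by simp
          ultimately show ?thesis using e Xg1 by simp
        next
          case False
          then show ?thesis using Inf_mem[OF Xf S'] \<open>S = Xf\<close> by simp
        qed
      qed
    qed
    show "\<psi> ` cycles f = cycles g"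
    proof (intro equalityI subsetI)
      fix T assume "T \<in> \<psi> ` cycles f"
      then obtain S where S: "S \<in> cycles f" "T = \<psi> S" by blast
      show "T \<in> cycles g"
      proof (cases "finite S")
        case True then show ?thesis using psiF[of S] S Fin_cycles by blast
      next
        case False then show ?thesis using psiI S Xg1 by simp
      qed
    next
      fix T assume T: "T \<in> cycles g"
      show "T \<in> \<psi> ` cycles f"
      proof (cases "finite T")
        case True
        then have TF: "T \<in> Fin g" using T Fin_cycles by blast
        define n where "n = card T"
        have n: "0 < n" unfolding n_def using Fin_card_pos[OF TF] .
        have "T \<in> {S\<in>Fin g. card S = n}" using TF n_def by simp
        moreover have "\<phi> n ` {S\<in>Fin f. card S = n} = {S\<in>Fin g. card S = n}"
          using phi[OF n] by (simp add: bij_betw_def)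
        ultimately have "T \<in> \<phi> n ` {S\<in>Fin f. card S = n}" by simp
        then obtain S where S: "S \<in> {S\<in>Fin f. card S = n}" "\<phi> n S = T" by (elim imageE) simp
        then have "\<psi> S = T" unfolding \<psi>_def using Fin_cycles by auto
        then show ?thesis using S Fin_cycles by blast
      next
        case False
        then have "T = Xg" using Inf_mem[OF Xg T] by simp
        then show ?thesis using psiI Xf1 by (metis image_eqI)
      qed
    qed
  qed
  define bf where "bf S = (if S - range f \<noteq> {} then (SOME x. x \<in> S - range f) else (SOME x. x \<in> S))" for S
  define bg where "bg T = (if T - range g \<noteq> {} then (SOME x. x \<in> T - range g) else (SOME x. x \<in> T))" for T
  have bf12: "bf S \<in> S \<and> (S - range f \<noteq> {} \<longrightarrow> bf S \<notin> range f)" if "S \<noteq> {}" for S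
  proof (cases "S - range f \<noteq> {}")
    case True
    have "(SOME x. x \<in> S - range f) \<in> S - range f" using True by (simp only: some_in_eq not_False_eq_True)
    then show ?thesis unfolding bf_def if_P[OF True] by blast
  next
    case False
    have "(SOME x. x \<in> S) \<in> S" using that by (simp only: some_in_eq not_False_eq_True)
    then show ?thesis unfolding bf_def if_not_P[OF False] using False by blast
  qed
  have bg12: "bg T \<in> T \<and> (T - range g \<noteq> {} \<longrightarrow> bg T \<notin> range g)" if "T \<noteq> {}" for T
  proof (cases "T - range g \<noteq> {}")
    case True
    have "(SOME x. x \<in> T - range g) \<in> T - range g" using True by (simp only: some_in_eq not_False_eq_True)
    then show ?thesis unfolding bg_def if_P[OF True] by blast
  next
    case False
    have "(SOME x. x \<in> T) \<in> T" using that by (simp only: some_in_eq not_False_eq_True)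
    then show ?thesis unfolding bg_def if_not_P[OF False] using False by blast
  qed
  have bf1: "bf S \<in> S" if "S \<in> cycles f" for S using bf12 cycles_nonempty[OF that] by blast
  have bg1: "bg T \<in> T" if "T \<in> cycles g" for T using bg12 cycles_nonempty[OF that] by blast
  have bf2: "bf S \<notin> range f" if "S - range f \<noteq> {}" for S using bf12 that by blast
  have bg2: "bg T \<notin> range g" if "T - range g \<noteq> {}" for T using bg12 that by blast
  have psi1: "\<psi> S \<in> cycles g" if "S \<in> cycles f" for S using bij that bij_betwE by blast
  have C2: "\<forall>S\<in>cycles f. \<forall>a b. (f^^a) (bf S) = (f^^b) (bf S) \<longleftrightarrow> (g^^a) (bg (\<psi> S)) = (g^^b) (bg (\<psi> S))"
  proof (intro ballI allI)
    fix S a b assume S: "S \<in> cycles f"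
    have Ss: "S = cls f (bf S)" using cycles_mem[OF S bf1[OF S]] .
    have Tt: "\<psi> S = cls g (bg (\<psi> S))" using cycles_mem[OF psi1[OF S] bg1[OF psi1[OF S]]] .
    show "(f^^a) (bf S) = (f^^b) (bf S) \<longleftrightarrow> (g^^a) (bg (\<psi> S)) = (g^^b) (bg (\<psi> S))"
    proof (cases "finite S")
      case True
      then have SF: "S \<in> Fin f" using S Fin_cycles by blast
      have ft: "finite (\<psi> S)" and ct: "card (\<psi> S) = card S" using psiF[OF SF] Fin_cycles by auto
      show ?thesis using finite_cls_iff_eq[OF f, of "bf S"] finite_cls_iff_eq[OF g, of "bg (\<psi> S)"]
        Ss Tt True ft ct by metis
    next
      case False
      have "infinite (\<psi> S)" using psiI[OF False] Xg1 by simp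
      then show ?thesis using infinite_cls_iff_eq[OF f, of "bf S"] infinite_cls_iff_eq[OF g, of "bg (\<psi> S)"]
        Ss Tt False by metis
    qed
  qed
  have C3: "\<forall>S\<in>cycles f. (S \<subseteq> range f \<and> \<psi> S \<subseteq> range g) \<or> (bf S \<notin> range f \<and> bg (\<psi> S) \<notin> range g)"
  proof
    fix S assume S: "S \<in> cycles f"
    show "(S \<subseteq> range f \<and> \<psi> S \<subseteq> range g) \<or> (bf S \<notin> range f \<and> bg (\<psi> S) \<notin> range g)"
    proof (cases "finite S")
      case True
      then have SF: "S \<in> Fin f" using S Fin_cycles by blast
      have ft: "finite (\<psi> S)" using psiF[OF SF] Fin_cycles by auto
      have "S \<subseteq> range f"
      proof
        fix y assume y: "y \<in> S"
        have "S = cls f y" using cycles_mem[OF S y] .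
        then show "y \<in> range f" using finite_cls_range[OF f, of y y] True by simp
      qed
      moreover have "\<psi> S \<subseteq> range g"
      proof
        fix y assume y: "y \<in> \<psi> S"
        have "\<psi> S = cls g y" using cycles_mem[OF psi1[OF S] y] .
        then show "y \<in> range g" using finite_cls_range[OF g, of y y] ft by simp
      qed
      ultimately show ?thesis by blast
    next
      case False
      have SX: "S = Xf" using Inf_mem[OF Xf S False] .
      have TX: "\<psi> S = Xg" using psiI[OF False] .
      have ee: "Xf - range f \<noteq> {} \<longleftrightarrow> Xg - range g \<noteq> {}" using it inftype_single[OF Xf] inftype_single[OF Xg] by simp
      show ?thesis
      proof (cases "Xf - range f \<noteq> {}")
        case True
        then show ?thesis using bf2 bg2 ee SX TX by metis
      next
        case False
        then show ?thesis using ee SX TX by blast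
      qed
    qed
  qed
  show ?thesis using conj_exists[OF f g bij _ _ C2 C3] bf1 bg1 by blast
qed



definition cnt :: "('a \<Rightarrow> 'a) \<Rightarrow> nat \<Rightarrow> nat" where
  "cnt g n = card {S\<in>Fin g. card S = n}"

definition hh :: "('a \<Rightarrow> 'a) \<Rightarrow> ('a \<Rightarrow> 'a) \<Rightarrow> nat \<Rightarrow> nat" where
  "hh f g n = nat \<bar>int (cnt f n) - int (cnt g n)\<bar>"

definition DD :: "('a \<Rightarrow> 'a) \<Rightarrow> ('a \<Rightarrow> 'a) \<Rightarrow> nat set" where
  "DD f g = {n. 0 < n \<and> cnt f n \<noteq> cnt g n}"

lemma hh0: "hh f g n = 0 \<longleftrightarrow> cnt f n = cnt g n"
  unfolding hh_def by simp

lemma measure_step: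
  assumes fin: "finite (DD f g)" and n: "n \<in> DD f g"
    and oth: "\<forall>n'. n' \<noteq> n \<longrightarrow> cnt gt n' = cnt g n'"
    and hn: "hh f gt n = hh f g n - 1"
    and sm: "sum (hh f g) (DD f g) = Suc m"
  shows "finite (DD f gt) \<and> sum (hh f gt) (DD f gt) = m"
proof -
  have sub: "DD f gt \<subseteq> DD f g" unfolding DD_def using oth n unfolding DD_def by auto
  have fin': "finite (DD f gt)" using finite_subset[OF sub fin] .
  have hpos: "0 < hh f g n" using n unfolding DD_def using hh0 by (metis (mono_tags) mem_Collect_eq not_gr0)
  have e1: "sum (hh f gt) (DD f gt) = sum (hh f gt) (DD f g)"
  proof (rule sum.mono_neutral_left[OF fin sub], intro ballI)
    fix i assume "i \<in> DD f g - DD f gt"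
    then have "cnt f i = cnt gt i" unfolding DD_def by auto
    then show "hh f gt i = 0" using hh0 by blast
  qed
  have e2: "sum (hh f gt) (DD f g) = hh f gt n + sum (hh f gt) (DD f g - {n})" using sum.remove[OF fin n] .
  have e3: "sum (hh f gt) (DD f g - {n}) = sum (hh f g) (DD f g - {n})"
    using oth unfolding hh_def by (intro sum.cong) auto
  have e4: "sum (hh f g) (DD f g) = hh f g n + sum (hh f g) (DD f g - {n})" using sum.remove[OF fin n] .
  show ?thesis using e1 e2 e3 e4 hn sm hpos fin' by simp
qed



lemma merge_cnt:
  fixes g :: "'a \<Rightarrow> 'a"
  assumes P: "Pg g" and A: "A \<in> Fin g" and X: "Inf g = {X}" and a: "a \<in> A" and b: "b \<in> X"
    and gt: "gt = g \<circ> transpose a b"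
  shows "a \<noteq> b \<and> (\<forall>n'. n' \<noteq> card A \<longrightarrow> cnt gt n' = cnt g n') \<and> cnt gt (card A) = cnt g (card A) - 1"
proof -
  have g: "inj g" using P unfolding Pg_def by blast
  have Ac: "A \<in> cycles g" "finite A" using A Fin_cycles by auto
  have Xc: "X \<in> cycles g" "infinite X" using X unfolding Inf_def by auto
  have Aa: "A = cls g a" using cycles_mem[OF Ac(1) a] .
  have Xb: "X = cls g b" using cycles_mem[OF Xc(1) b] .
  have bA: "b \<notin> A"
  proof
    assume "b \<in> A" then have "A = X" using Aa Xb cls_eq by metis
    then show False using Ac Xc by simp
  qed
  have ab: "a \<noteq> b" using a bA by blast
  have rep: "cycles gt = (cycles g - {A, X}) \<union> {A \<union> X}"
    using merge_cycles[OF g _ _ gt] Aa Xb Ac(2) bA by simp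
  have FF: "Fin gt = Fin g - {A}"
  proof (intro equalityI subsetI)
    fix S assume "S \<in> Fin gt"
    then have "S \<in> cycles gt" "finite S" using Fin_cycles by auto
    then show "S \<in> Fin g - {A}" using rep Xc(2) Fin_cycles by auto
  next
    fix S assume S: "S \<in> Fin g - {A}"
    then have "S \<in> cycles g" "finite S" "S \<noteq> A" using Fin_cycles by auto
    moreover have "S \<noteq> X" using Xc(2) \<open>finite S\<close> by auto
    ultimately show "S \<in> Fin gt" using rep Fin_cycles by auto
  qed
  have e: "{S\<in>Fin gt. card S = n'} = {S\<in>Fin g. card S = n'} - {A}" for n' unfolding FF by auto
  have "cnt gt n' = cnt g n'" if "n' \<noteq> card A" for n'
  proof -
    have "{S\<in>Fin g. card S = n'} - {A} = {S\<in>Fin g. card S = n'}" using that by auto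
    then show ?thesis unfolding cnt_def e by simp
  qed
  moreover have "cnt gt (card A) = cnt g (card A) - 1"
  proof -
    have "finite {S\<in>Fin g. card S = card A}" using P Fin_card_pos[OF A] unfolding Pg_def by blast
    then show ?thesis unfolding cnt_def e using A by (simp add: card_Diff_singleton)
  qed
  ultimately show ?thesis using ab by blast
qed

lemma split_cnt:
  fixes g :: "'a \<Rightarrow> 'a"
  assumes P: "Pg g" and X: "Inf g = {X}" and a: "a \<in> X" and n: "0 < n" and b: "b = (g^^n) a"
    and gt: "gt = g \<circ> transpose a b"
  shows "a \<noteq> b \<and> (\<forall>n'. n' \<noteq> n \<longrightarrow> cnt gt n' = cnt g n') \<and> cnt gt n = Suc (cnt g n)"
proof -
  have g: "inj g" using P unfolding Pg_def by blast
  have Xc: "X \<in> cycles g" "infinite X" using X unfolding Inf_def by auto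
  have Xa: "X = cls g a" using cycles_mem[OF Xc(1) a] .
  have ne: "\<forall>i. 0 < i \<and> i \<le> n \<longrightarrow> (g^^i) a \<noteq> a"
  proof (intro allI impI)
    fix i assume "0 < i \<and> i \<le> n"
    then have "(g^^i) a \<noteq> (g^^0) a" using infinite_cls_iff_eq[OF g, of a i 0] Xa Xc(2) by simp
    then show "(g^^i) a \<noteq> a" by simp
  qed
  have ab: "a \<noteq> b" using ne n b by auto
  define C1 where "C1 = (\<lambda>i. (g^^i) a) ` {1..n}"
  note sp = split_cycles[OF g n ne b gt, folded C1_def Xa]
  have C1ne: "C1 \<noteq> {}" unfolding C1_def using n by auto
  have C1nc: "C1 \<notin> cycles g"
  proof (rule class_ne_sub[of C1 g a])
    show "C1 \<subseteq> cls g a" using sp(4) Xa by simp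
    show "C1 \<noteq> cls g a" using sp(5) cls_self[of a g] by blast
    show "C1 \<noteq> {}" by (rule C1ne)
  qed
  have iXC1: "infinite (X - C1)" using Xc(2) sp(2) by simp
  have rep: "cycles gt = (cycles g - {X}) \<union> {C1, X - C1}" using sp(1) .
  have FF: "Fin gt = insert C1 (Fin g)"
  proof (intro equalityI subsetI)
    fix S assume "S \<in> Fin gt"
    then have "S \<in> cycles gt" "finite S" using Fin_cycles by auto
    then show "S \<in> insert C1 (Fin g)" using rep iXC1 Fin_cycles by auto
  next
    fix S assume S: "S \<in> insert C1 (Fin g)"
    show "S \<in> Fin gt"
    proof (cases "S = C1")
      case True then show ?thesis using rep sp(2) Fin_cycles by auto
    next
      case False
      then have "S \<in> cycles g" "finite S" using S Fin_cycles by auto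
      moreover have "S \<noteq> X" using Xc(2) \<open>finite S\<close> by auto
      ultimately show ?thesis using rep Fin_cycles by auto
    qed
  qed
  have C1F: "C1 \<notin> Fin g" using C1nc Fin_cycles by auto
  have "cnt gt n' = cnt g n'" if "n' \<noteq> n" for n'
  proof -
    have "{S\<in>Fin gt. card S = n'} = {S\<in>Fin g. card S = n'}" unfolding FF using that sp(3) by auto
    then show ?thesis unfolding cnt_def by simp
  qed
  moreover have "cnt gt n = Suc (cnt g n)"
  proof -
    have "{S\<in>Fin gt. card S = n} = insert C1 {S\<in>Fin g. card S = n}" unfolding FF using sp(3) by auto
    moreover have "finite {S\<in>Fin g. card S = n}" using P n unfolding Pg_def by blast
    ultimately show ?thesis unfolding cnt_def using C1F by simp
  qed
  ultimately show ?thesis using ab by blast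
qed



lemma reduce:
  fixes f :: "'a \<Rightarrow> 'a"
  shows "\<forall>g. Pg g \<longrightarrow> (inftype g \<longleftrightarrow> inftype f) \<longrightarrow> finite (DD f g) \<longrightarrow> sum (hh f g) (DD f g) = m \<longrightarrow>
    (\<exists>q. swapidseq m q \<and> Pg (g \<circ> q) \<and> (inftype (g \<circ> q) \<longleftrightarrow> inftype f) \<and> (\<forall>n>0. cnt (g \<circ> q) n = cnt f n))"
proof (induction m)
  case 0
  show ?case
  proof (intro allI impI)
    fix g :: "'a \<Rightarrow> 'a"
    assume P: "Pg g" and it: "inftype g \<longleftrightarrow> inftype f" and fin: "finite (DD f g)" and s: "sum (hh f g) (DD f g) = 0"
    have "DD f g = {}"
    proof (rule ccontr)
      assume "DD f g \<noteq> {}"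
      then obtain n where n: "n \<in> DD f g" by blast
      then have "hh f g n = 0" using s fin by simp
      then show False using n hh0 unfolding DD_def by auto
    qed
    then have "\<forall>n>0. cnt g n = cnt f n" unfolding DD_def by (metis (mono_tags, lifting) empty_Collect_eq)
    then show "\<exists>q. swapidseq 0 q \<and> Pg (g \<circ> q) \<and> (inftype (g \<circ> q) \<longleftrightarrow> inftype f) \<and> (\<forall>n>0. cnt (g \<circ> q) n = cnt f n)"
      using P it by (intro exI[of _ id]) simp
  qed
next
  case (Suc m)
  show ?case
  proof (intro allI impI)
    fix g :: "'a \<Rightarrow> 'a"
    assume P: "Pg g" and it: "inftype g \<longleftrightarrow> inftype f" and fin: "finite (DD f g)" and s: "sum (hh f g) (DD f g) = Suc m"
    have "DD f g \<noteq> {}" using s by auto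
    then obtain n where n: "n \<in> DD f g" by blast
    have n0: "0 < n" and nd: "cnt f n \<noteq> cnt g n" using n unfolding DD_def by auto
    obtain X where X: "Inf g = {X}" using P unfolding Pg_def by blast
    have "X \<noteq> {}" using X unfolding Inf_def by auto
    then obtain b where b: "b \<in> X" by blast
    have "\<exists>a b gt. a \<noteq> b \<and> gt = g \<circ> transpose a b \<and> (\<forall>n'. n' \<noteq> n \<longrightarrow> cnt gt n' = cnt g n') \<and> hh f gt n = hh f g n - 1"
    proof (cases "cnt f n < cnt g n")
      case True
      then have "{S\<in>Fin g. card S = n} \<noteq> {}" unfolding cnt_def by (metis card.empty not_less_zero)
      then obtain A where A: "A \<in> Fin g" "card A = n" by blast
      then have "A \<noteq> {}" using Fin_cycles cycles_nonempty by blast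
      then obtain a where a: "a \<in> A" by blast
      note mc = merge_cnt[OF P A(1) X a b refl]
      have "hh f (g \<circ> transpose a b) n = hh f g n - 1" using mc A(2) True unfolding hh_def by simp
      then show ?thesis using mc A(2) by blast
    next
      case False
      then have lt: "cnt g n < cnt f n" using nd by simp
      note sc = split_cnt[OF P X b n0 refl refl]
      have "hh f (g \<circ> transpose b ((g^^n) b)) n = hh f g n - 1" using sc lt unfolding hh_def by simp
      then show ?thesis using sc by blast
    qed
    then obtain a b' gt where ab: "a \<noteq> b'" and gt: "gt = g \<circ> transpose a b'"
      and oth: "\<forall>n'. n' \<noteq> n \<longrightarrow> cnt gt n' = cnt g n'" and hn: "hh f gt n = hh f g n - 1" by blast
    have st: "Pg gt \<and> (inftype gt \<longleftrightarrow> inftype g)" using step[OF P ab gt] by blast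
    have ms: "finite (DD f gt) \<and> sum (hh f gt) (DD f gt) = m" using measure_step[OF fin n oth hn s] .
    obtain q where q: "swapidseq m q" "Pg (gt \<circ> q)" "inftype (gt \<circ> q) \<longleftrightarrow> inftype f" "\<forall>n>0. cnt (gt \<circ> q) n = cnt f n"
      using Suc.IH st it ms by blast
    have sq: "swapidseq (Suc m) (transpose a b' \<circ> q)" using swapidseq.comp_Suc[OF q(1) ab] .
    have eq: "g \<circ> (transpose a b' \<circ> q) = gt \<circ> q" using gt by (simp add: o_assoc)
    show "\<exists>q. swapidseq (Suc m) q \<and> Pg (g \<circ> q) \<and> (inftype (g \<circ> q) \<longleftrightarrow> inftype f) \<and> (\<forall>n>0. cnt (g \<circ> q) n = cnt f n)"
      using sq q eq by (intro exI[of _ "transpose a b' \<circ> q"]) simp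
  qed
qed



lemma Pg_of:
  assumes "inj f" "\<exists>!S. S \<in> cycles f \<and> infinite S" "\<forall>n>0. Cn n f \<noteq> \<infinity>"
  shows "Pg f"
proof -
  have "\<forall>n>0. finite {S\<in>Fin f. card S = n}"
  proof (intro allI impI)
    fix n :: nat assume "0 < n"
    then have "ecard {S\<in>Fin f. card S = n} \<noteq> \<infinity>" using assms(3) Cn_Fin by metis
    then show "finite {S\<in>Fin f. card S = n}" unfolding ecard_def by (auto split: if_splits)
  qed
  then show ?thesis unfolding Pg_def using assms(1) assms(2)[unfolded uniq_inf_iff] by blast
qed

lemma Cn_cnt': "Pg f \<Longrightarrow> 0 < n \<Longrightarrow> Cn n f = enat (cnt f n)"
  unfolding cnt_def Pg_def using Cn_cnt by blast

lemma even_abs_sum: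
  fixes z :: "nat \<Rightarrow> int"
  assumes "finite D"
  shows "even (\<Sum>n\<in>D. nat \<bar>z n\<bar>) \<longleftrightarrow> even (\<Sum>n\<in>D. z n)"
proof -
  have "even (\<Sum>n\<in>D. nat \<bar>z n\<bar>) \<longleftrightarrow> even (card {n\<in>D. odd (nat \<bar>z n\<bar>)})" using even_sum_iff[OF assms] .
  moreover have "even (\<Sum>n\<in>D. z n) \<longleftrightarrow> even (card {n\<in>D. odd (z n)})" using even_sum_iff[OF assms] .
  moreover have "{n\<in>D. odd (nat \<bar>z n\<bar>)} = {n\<in>D. odd (z n)}"
  proof -
    have "odd (nat \<bar>k\<bar>) \<longleftrightarrow> odd k" for k :: int
      using even_nat_iff[of "\<bar>k\<bar>"] by simp
    then show ?thesis by simp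
  qed
  ultimately show ?thesis by simp
qed

theorem mainTheorem18:
  fixes f g :: "'a::countable \<Rightarrow> 'a"
  assumes "infinite (UNIV :: 'a set)"
    and "inj f" and "inj g"
    and "\<exists>!S. S \<in> cycles f \<and> infinite S"
    and "\<exists>!S. S \<in> cycles g \<and> infinite S"
    and "\<forall>n>0. Cn n f \<noteq> \<infinity>"
    and "\<forall>n>0. Cn n g \<noteq> \<infinity>"
  shows "approx_even f g \<longleftrightarrow>
    (\<exists>h h1 h2. bij h \<and> h1 \<in> Alt \<and> h2 \<in> Alt \<and> f = inv h \<circ> h2 \<circ> g \<circ> h1 \<circ> h)"
proof
  have Pf: "Pg f" by (rule Pg_of[OF assms(2,4,6)])
  have Pg: "Pg g" by (rule Pg_of[OF assms(3,5,7)])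
  assume ae: "approx_even f g"
  have af: "approx_fin f g" using ae unfolding approx_even_def by blast
  have "C_fwd f = C_fwd g" using af unfolding approx_fin_def by blast
  then have it: "inftype g \<longleftrightarrow> inftype f" using C_fwd_Pg[OF Pf] C_fwd_Pg[OF Pg]
    by (auto split: if_splits)
  have DDe: "DD f g = {n. 0 < n \<and> Cn n f \<noteq> Cn n g}"
    unfolding DD_def using Cn_cnt'[OF Pf] Cn_cnt'[OF Pg] by auto
  have fin: "finite (DD f g)" using af unfolding approx_fin_def DDe by blast
  have ev0: "even (\<Sum>n\<in>DD f g. int (the_enat (Cn n f)) - int (the_enat (Cn n g)))"
    using ae unfolding approx_even_def DDe by blast
  have "(\<Sum>n\<in>DD f g. int (the_enat (Cn n f)) - int (the_enat (Cn n g))) =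
        (\<Sum>n\<in>DD f g. int (cnt f n) - int (cnt g n))"
    using Cn_cnt'[OF Pf] Cn_cnt'[OF Pg] unfolding DD_def by (intro sum.cong) auto
  then have ev1: "even (\<Sum>n\<in>DD f g. int (cnt f n) - int (cnt g n))" using ev0 by simp
  define m where "m = sum (hh f g) (DD f g)"
  have "m = (\<Sum>n\<in>DD f g. nat \<bar>int (cnt f n) - int (cnt g n)\<bar>)" unfolding m_def hh_def by simp
  then have em: "even m" using even_abs_sum[OF fin, of "\<lambda>n. int (cnt f n) - int (cnt g n)"] ev1 by simp
  obtain q where q: "swapidseq m q" "Pg (g \<circ> q)" "inftype (g \<circ> q) \<longleftrightarrow> inftype f" "\<forall>n>0. cnt (g \<circ> q) n = cnt f n"
    using reduce[where m=m and f=f] Pg it fin m_def by blast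
  obtain k where k: "bij k" "\<forall>x. k (f x) = (g \<circ> q) (k x)"
    using conj_same_type[OF Pf q(2)] q(3,4) unfolding cnt_def by auto
  have qA: "q \<in> Alt" unfolding Alt_def permutation_def using q(1) evenperm_unique[OF q(1) refl] em by auto
  have idA: "id \<in> Alt" unfolding Alt_def by simp
  have "f = inv k \<circ> id \<circ> g \<circ> q \<circ> k"
  proof
    fix x
    have "inv k (k (f x)) = f x" using k(1) by (simp add: bij_is_inj)
    then show "f x = (inv k \<circ> id \<circ> g \<circ> q \<circ> k) x" using k(2) by simp
  qed
  then show "\<exists>h h1 h2. bij h \<and> h1 \<in> Alt \<and> h2 \<in> Alt \<and> f = inv h \<circ> h2 \<circ> g \<circ> h1 \<circ> h"
    using k(1) qA idA by blast
next
  have Pg: "Pg g" by (rule Pg_of[OF assms(3,5,7)])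
  assume "\<exists>h h1 h2. bij h \<and> h1 \<in> Alt \<and> h2 \<in> Alt \<and> f = inv h \<circ> h2 \<circ> g \<circ> h1 \<circ> h"
  then obtain h h1 h2 where "bij h" "h1 \<in> Alt" "h2 \<in> Alt" "f = inv h \<circ> h2 \<circ> g \<circ> h1 \<circ> h" by blast
  then show "approx_even f g" using backward[OF Pg] by blast
qed


end
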